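(* Let $\psi:\mathbb{R}^d\to(-\infty,\infty]$ be proper, closed, convex, bounded from below with $\int e^{-\psi}<\infty$; fix $\lambda>0$ and let $\pi^\lambda(x)\propto e^{-\psi^\lambda(x)}$. Assume $$\limsup_{\|x\|\to\infty}\frac{\|\mathrm{prox}^\lambda_\psi(x)\|}{\|x\|}=l<1.$$ Consider the MALA chain targeting $\pi^\lambda$ with step size $h>0$: from $x$, propose $y\sim q_M(x,\cdot)$, the density of $N(c(x),h\mathbb I_d)$ with $c(x)=x-\frac h2\nabla\psi^\lambda(x)$, and accept with probability $\min\{1,\pi^\lambda(y)q_M(y,x)/(\pi^\lambda(x)q_M(x,y))\}$. Let $A(x)=\{y:\pi^\lambda(y)q_M(y,x)\ge \pi^\lambda(x)q_M(x,y)\}$ and $I(x)=\{y:\|y\|\le\|x\|\}$, and assume $A(\cdot)$ converges inwards in $q_M$, i.e. $\lim_{\|x\|\to\infty}\int_{A(x)\,\Delta\, I(x)}q_M(x,y)\,dy=0$, where $\Delta$ is symmetric difference. Then if $h\le 2\lambda$, the $\pi^\lambda$-MALA chain is geometrically ergodic.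
   Context: Moreau-Yosida envelope: $\psi^\lambda(x)=\inf_y\{\psi(y)+\frac1{2\lambda}\|y-x\|^2\}$; proximal mapping: $\mathrm{prox}^\lambda_\psi(x)=\arg\min_y\{\psi(y)+\frac1{2\lambda}\|y-x\|^2\}$ (unique). $\psi^\lambda$ is continuously differentiable with $\nabla\psi^\lambda(x)=\frac1\lambda(x-\mathrm{prox}^\lambda_\psi(x))$. *)

theory Defs
  imports "HOL-Analysis.Analysis"
begin

definition epigraph :: "('a \<Rightarrow> ereal) \<Rightarrow> ('a \<times> real) set" where
  "epigraph psi = {(x, t). psi x \<le> ereal t}"

definition proper_fun :: "('a \<Rightarrow> ereal) \<Rightarrow> bool" where
  "proper_fun psi \<longleftrightarrow> (\<exists>x. psi x < \<infinity>) \<and> (\<forall>x. psi x > -\<infinity>)"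

definition closed_fun :: "('a::topological_space \<Rightarrow> ereal) \<Rightarrow> bool" where
  "closed_fun psi \<longleftrightarrow> closed (epigraph psi)"

definition convex_fun :: "('a::real_vector \<Rightarrow> ereal) \<Rightarrow> bool" where
  "convex_fun psi \<longleftrightarrow> convex (epigraph psi)"

definition exp_neg :: "ereal \<Rightarrow> real" where
  "exp_neg v = (if v = \<infinity> then 0 else exp (- real_of_ereal v))"

definition moreau_env :: "real \<Rightarrow> ('a::real_normed_vector \<Rightarrow> ereal) \<Rightarrow> 'a \<Rightarrow> real" where
  "moreau_env lam psi x = real_of_ereal (INF y. psi y + ereal ((norm (y - x))\<^sup>2 / (2 * lam)))"

definition prox :: "real \<Rightarrow> ('a::real_normed_vector \<Rightarrow> ereal) \<Rightarrow> 'a \<Rightarrow> 'a" where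
  "prox lam psi x = (THE y. \<forall>z. psi y + ereal ((norm (y - x))\<^sup>2 / (2 * lam))
                                 \<le> psi z + ereal ((norm (z - x))\<^sup>2 / (2 * lam)))"

(* gradient of the Moreau envelope: (x - prox(x)) / lam *)
definition grad_env :: "real \<Rightarrow> ('a::real_normed_vector \<Rightarrow> ereal) \<Rightarrow> 'a \<Rightarrow> 'a" where
  "grad_env lam psi x = (1 / lam) *\<^sub>R (x - prox lam psi x)"

definition target_dens :: "real \<Rightarrow> ('a::euclidean_space \<Rightarrow> ereal) \<Rightarrow> 'a \<Rightarrow> real" where
  "target_dens lam psi x =
     exp (- moreau_env lam psi x) / (\<integral> z. exp (- moreau_env lam psi z) \<partial>lborel)"

definition target_measure :: "real \<Rightarrow> ('a::euclidean_space \<Rightarrow> ereal) \<Rightarrow> 'a measure" where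
  "target_measure lam psi = density lborel (\<lambda>x. ennreal (target_dens lam psi x))"

definition mala_q :: "real \<Rightarrow> ('a::euclidean_space \<Rightarrow> ereal) \<Rightarrow> real \<Rightarrow> 'a \<Rightarrow> 'a \<Rightarrow> real" where
  "mala_q lam psi h x y =
     (2 * pi * h) powr (- real DIM('a) / 2)
     * exp (- (norm (y - (x - (h / 2) *\<^sub>R grad_env lam psi x)))\<^sup>2 / (2 * h))"

definition mala_acc :: "real \<Rightarrow> ('a::euclidean_space \<Rightarrow> ereal) \<Rightarrow> real \<Rightarrow> 'a \<Rightarrow> 'a \<Rightarrow> real" where
  "mala_acc lam psi h x y =
     min 1 ((target_dens lam psi y * mala_q lam psi h y x) /
            (target_dens lam psi x * mala_q lam psi h x y))"

definition mala_op :: "real \<Rightarrow> ('a::euclidean_space \<Rightarrow> ereal) \<Rightarrow> real \<Rightarrow> ('a \<Rightarrow> real) \<Rightarrow> 'a \<Rightarrow> real" where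
  "mala_op lam psi h f x =
     (\<integral> y. mala_q lam psi h x y * mala_acc lam psi h x y * f y \<partial>lborel)
     + (1 - (\<integral> y. mala_q lam psi h x y * mala_acc lam psi h x y \<partial>lborel)) * f x"

definition mala_kernel_n :: "real \<Rightarrow> ('a::euclidean_space \<Rightarrow> ereal) \<Rightarrow> real \<Rightarrow> nat \<Rightarrow> 'a \<Rightarrow> 'a set \<Rightarrow> real" where
  "mala_kernel_n lam psi h n x A = ((mala_op lam psi h ^^ n) (indicator A)) x"

definition tv_dist :: "('a set \<Rightarrow> real) \<Rightarrow> 'a measure \<Rightarrow> real" where
  "tv_dist P M = (SUP A \<in> sets M. \<bar>P A - measure M A\<bar>)"

definition geometrically_ergodic :: "(nat \<Rightarrow> 'a \<Rightarrow> 'a set \<Rightarrow> real) \<Rightarrow> 'a measure \<Rightarrow> bool" where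
  "geometrically_ergodic Pn M \<longleftrightarrow>
     (\<exists>\<rho>::real. \<exists>C :: 'a \<Rightarrow> real. 0 \<le> \<rho> \<and> \<rho> < 1 \<and>
        (AE x in M. \<forall>n. tv_dist (Pn n x) M \<le> C x * \<rho> ^ n))"

end

theory Submission
  imports Defs "HOL-Probability.Distributions"
begin

definition gdens :: "real \<Rightarrow> 'a::euclidean_space \<Rightarrow> real" where
  "gdens h z = (2 * pi * h) powr (- real DIM('a) / 2) * exp (- (norm z)\<^sup>2 / (2 * h))"

lemma norm_sq_basis: "(norm (z::'a::euclidean_space))\<^sup>2 = (\<Sum>b\<in>Basis. (z \<bullet> b)\<^sup>2)"
  unfolding power2_norm_eq_inner by (subst euclidean_inner) (simp add: power2_eq_square)

lemma gdens_prod: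
  assumes h: "h > 0"
  shows "gdens h (z::'a::euclidean_space) = (\<Prod>b\<in>Basis. normal_density 0 (sqrt h) (z \<bullet> b))"
proof -
  have "(\<Prod>b\<in>Basis. normal_density 0 (sqrt h) (z \<bullet> b))
      = (\<Prod>b\<in>(Basis::'a set). (2*pi*h) powr (-1/2) * exp (- (z \<bullet> b)\<^sup>2 / (2 * h)))"
    using h by (intro prod.cong refl) (simp add: normal_density_def powr_minus_divide powr_half_sqrt)
  also have "\<dots> = ((2*pi*h) powr (-1/2)) ^ DIM('a) * exp (\<Sum>b\<in>(Basis::'a set). - (z \<bullet> b)\<^sup>2 / (2 * h))"
    by (simp add: prod.distrib exp_sum)
  also have "((2*pi*h) powr (-1/2)) ^ DIM('a) = (2*pi*h) powr (- real DIM('a) / 2)"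
    using h by (simp add: powr_realpow[symmetric] powr_powr)
  also have "(\<Sum>b\<in>(Basis::'a set). - (z \<bullet> b)\<^sup>2 / (2 * h)) = - (norm z)\<^sup>2 / (2 * h)"
    by (simp add: norm_sq_basis sum_divide_distrib sum_negf)
  finally show ?thesis by (simp add: gdens_def)
qed

lemma gdens_pos: "h > 0 \<Longrightarrow> gdens h z > 0"
  by (simp add: gdens_def)

lemma gdens_measurable[measurable]: "gdens h \<in> borel_measurable borel"
  unfolding gdens_def by measurable

lemma nn_integral_normal_density: "\<sigma> > 0 \<Longrightarrow> (\<integral>\<^sup>+x. ennreal (normal_density \<mu> \<sigma> x) \<partial>lborel) = 1"
  by (subst nn_integral_eq_integral) auto

lemma gdens_has_integral:
  assumes h: "h > 0"
  shows "has_bochner_integral lborel (gdens h :: 'a::euclidean_space \<Rightarrow> real) 1"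
proof (rule has_bochner_integral_nn_integral)
  have "(\<integral>\<^sup>+x. ennreal (gdens h (x::'a)) \<partial>lborel)
       = (\<integral>\<^sup>+x. (\<Prod>b\<in>Basis. ennreal (normal_density 0 (sqrt h) ((x::'a) \<bullet> b))) \<partial>lborel)"
    using h by (intro nn_integral_cong) (simp add: gdens_prod prod_ennreal)
  also have "\<dots> = (\<Prod>b\<in>(Basis::'a set). (\<integral>\<^sup>+x. ennreal (normal_density 0 (sqrt h) x) \<partial>lborel))"
    by (rule nn_integral_lborel_prod) auto
  also have "\<dots> = 1" using h by (simp add: nn_integral_normal_density)
  finally show "(\<integral>\<^sup>+x. ennreal (gdens h (x::'a)) \<partial>lborel) = ennreal 1" by simp
qed (auto simp: less_imp_le[OF gdens_pos[OF h]])

lemma gdens_moment_basis: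
  assumes h: "h > 0" and b: "b \<in> (Basis::'a::euclidean_space set)"
  shows "has_bochner_integral lborel (\<lambda>z::'a. gdens h z * (z \<bullet> b)\<^sup>2) h"
proof (rule has_bochner_integral_nn_integral)
  let ?f = "\<lambda>b' t. ennreal (normal_density 0 (sqrt h) t * (if b' = b then t\<^sup>2 else 1))"
  have "(\<integral>\<^sup>+x. ennreal (gdens h x * (x \<bullet> b)\<^sup>2) \<partial>lborel)
       = (\<integral>\<^sup>+x. (\<Prod>b'\<in>Basis. ?f b' (x \<bullet> b')) \<partial>lborel)"
  proof (intro nn_integral_cong)
    fix x :: 'a
    have "(\<Prod>b'\<in>Basis. normal_density 0 (sqrt h) (x \<bullet> b') * (if b' = b then (x \<bullet> b')\<^sup>2 else 1))
        = (\<Prod>b'\<in>Basis. normal_density 0 (sqrt h) (x \<bullet> b')) * (\<Prod>b'\<in>Basis. (if b' = b then (x \<bullet> b')\<^sup>2 else 1))"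
      by (simp add: prod.distrib)
    also have "(\<Prod>b'\<in>Basis. (if b' = b then (x \<bullet> b')\<^sup>2 else 1)) = (x \<bullet> b)\<^sup>2"
      using b by (simp add: prod.delta)
    moreover have "(\<Prod>b'\<in>Basis. ?f b' (x \<bullet> b')) = ennreal (\<Prod>b'\<in>Basis. normal_density 0 (sqrt h) (x \<bullet> b') * (if b' = b then (x \<bullet> b')\<^sup>2 else 1))"
      by (rule prod_ennreal) auto
    ultimately show "ennreal (gdens h x * (x \<bullet> b)\<^sup>2) = (\<Prod>b'\<in>Basis. ?f b' (x \<bullet> b'))"
      using h by (simp add: gdens_prod)
  qed
  also have "\<dots> = (\<Prod>b'\<in>(Basis::'a set). (\<integral>\<^sup>+x. ?f b' x \<partial>lborel))"
    by (rule nn_integral_lborel_prod) auto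
  also have "\<dots> = (\<Prod>b'\<in>(Basis::'a set). (if b' = b then ennreal h else 1))"
  proof (intro prod.cong refl)
    fix b' assume "b' \<in> (Basis::'a set)"
    show "(\<integral>\<^sup>+x. ?f b' x \<partial>lborel) = (if b' = b then ennreal h else 1)"
    proof (cases "b' = b")
      case True
      have "has_bochner_integral lborel (\<lambda>x. normal_density 0 (sqrt h) x * (x - 0) ^ (2 * 1))
              (fact (2 * 1) / ((2 / (sqrt h)\<^sup>2)^1 * fact 1))"
        by (rule normal_moment_even) (use h in auto)
      then have "has_bochner_integral lborel (\<lambda>x. normal_density 0 (sqrt h) x * x\<^sup>2) h"
        using h by simp
      then have "(\<integral>\<^sup>+x. ennreal (normal_density 0 (sqrt h) x * x\<^sup>2) \<partial>lborel) = ennreal h"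
        by (subst nn_integral_eq_integral) (auto simp: has_bochner_integral_iff)
      then show ?thesis using True by simp
    next
      case False then show ?thesis using h by (simp add: nn_integral_normal_density)
    qed
  qed
  also have "\<dots> = ennreal h" using b by (simp add: prod.delta)
  finally show "(\<integral>\<^sup>+x. ennreal (gdens h x * (x \<bullet> b)\<^sup>2) \<partial>lborel) = ennreal h" .
qed (use h in \<open>auto simp: less_imp_le[OF gdens_pos[OF h]]\<close>)

lemma gdens_moment2:
  assumes h: "h > 0"
  shows "has_bochner_integral lborel (\<lambda>z::'a::euclidean_space. gdens h z * (norm z)\<^sup>2) (real DIM('a) * h)"
proof -
  have "has_bochner_integral lborel (\<lambda>z::'a. \<Sum>b\<in>Basis. gdens h z * (z \<bullet> b)\<^sup>2) (\<Sum>b\<in>(Basis::'a set). h)"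
    by (intro has_bochner_integral_sum gdens_moment_basis h)
  then show ?thesis by (simp add: norm_sq_basis sum_distrib_left)
qed

lemma lborel_shift_integral:
  fixes c :: "'a::euclidean_space" and f :: "'a \<Rightarrow> real"
  assumes [measurable]: "f \<in> borel_measurable borel"
  shows "integrable lborel f \<longleftrightarrow> integrable lborel (\<lambda>z. f (c + z))"
    and "(\<integral>z. f z \<partial>lborel) = (\<integral>z. f (c + z) \<partial>lborel)"
proof -
  have "integrable lborel f \<longleftrightarrow> integrable (distr lborel borel ((+) c)) f"
    by (simp add: lborel_distr_plus)
  also have "\<dots> \<longleftrightarrow> integrable lborel (\<lambda>z. f (c + z))"
    by (rule integrable_distr_eq) auto
  finally show "integrable lborel f \<longleftrightarrow> integrable lborel (\<lambda>z. f (c + z))" .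
  have "(\<integral>z. f z \<partial>lborel) = (\<integral>z. f z \<partial>distr lborel borel ((+) c))"
    by (simp add: lborel_distr_plus)
  also have "\<dots> = (\<integral>z. f (c + z) \<partial>lborel)"
    by (rule integral_distr) auto
  finally show "(\<integral>z. f z \<partial>lborel) = (\<integral>z. f (c + z) \<partial>lborel)" .
qed

locale proxset =
  fixes psi :: "'a::euclidean_space \<Rightarrow> ereal" and lam m :: real
  assumes proper: "proper_fun psi"
    and closed: "closed_fun psi"
    and convex: "convex_fun psi"
    and lower: "\<And>x. ereal m \<le> psi x"
    and lam_pos: "lam > 0"
begin

definition F :: "'a \<Rightarrow> 'a \<Rightarrow> ereal" where
  "F x y = psi y + ereal ((norm (y - x))\<^sup>2 / (2 * lam))"

lemma psi_finite: "psi y \<noteq> \<infinity> \<Longrightarrow> \<exists>s. psi y = ereal s \<and> m \<le> s"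
  using lower[of y] by (cases "psi y") auto

lemma psi_conv:
  assumes "psi a = ereal sa" "psi b = ereal sb" "0 \<le> t" "t \<le> 1"
  shows "psi ((1 - t) *\<^sub>R a + t *\<^sub>R b) \<le> ereal ((1 - t) * sa + t * sb)"
proof -
  have "(a, sa) \<in> epigraph psi" "(b, sb) \<in> epigraph psi"
    using assms by (auto simp: epigraph_def)
  from convexD[OF convex[unfolded convex_fun_def] this, of "1 - t" t]
  have "(1 - t) *\<^sub>R (a, sa) + t *\<^sub>R (b, sb) \<in> epigraph psi" using assms by auto
  then show ?thesis by (simp add: epigraph_def)
qed

lemma F_ge: "ereal m \<le> F x y"
proof -
  have "ereal m + 0 \<le> psi y + ereal ((norm (y - x))\<^sup>2 / (2 * lam))"
    using lower[of y] lam_pos by (intro add_mono) auto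
  then show ?thesis by (simp add: F_def)
qed

lemma exists_min: "\<exists>p. \<forall>z. F x p \<le> F x z"
proof -
  obtain y0 where y0: "psi y0 < \<infinity>" using proper by (auto simp: proper_fun_def)
  define Ie where "Ie = (INF y. F x y)"
  have "Ie \<le> F x y0" unfolding Ie_def by (rule INF_lower) auto
  also have "F x y0 < \<infinity>" using y0 by (simp add: F_def)
  finally have "Ie < \<infinity>" .
  moreover have "ereal m \<le> Ie" unfolding Ie_def by (rule INF_greatest) (rule F_ge)
  ultimately obtain I where I: "Ie = ereal I" "m \<le> I" by (cases Ie) auto
  have "\<forall>n. \<exists>y. F x y < ereal (I + inverse (real (Suc n)))"
  proof
    fix n
    have "Ie < ereal (I + inverse (real (Suc n)))" using I by simp
    then show "\<exists>y. F x y < ereal (I + inverse (real (Suc n)))"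
      unfolding Ie_def by (auto simp: INF_less_iff)
  qed
  then obtain Y where Y: "\<And>n. F x (Y n) < ereal (I + inverse (real (Suc n)))" by metis
  have fin: "psi (Y n) \<noteq> \<infinity>" for n using Y[of n] by (auto simp: F_def)
  define s where "s n = real_of_ereal (psi (Y n))" for n
  have s: "psi (Y n) = ereal (s n)" "m \<le> s n" for n
    using psi_finite[OF fin[of n]] by (auto simp: s_def)
  have sY: "s n + (norm (Y n - x))\<^sup>2 / (2 * lam) < I + inverse (real (Suc n))" for n
    using Y[of n] s[of n] by (simp add: F_def)
  have bnd: "(norm (Y n - x))\<^sup>2 \<le> 2 * lam * (I + 1 - m)" for n
  proof -
    have "inverse (real (Suc n)) \<le> 1" by (simp add: inverse_le_1_iff)
    then have "(norm (Y n - x))\<^sup>2 / (2 * lam) \<le> I + 1 - m" using sY[of n] s(2)[of n] by linarith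
    then show ?thesis using lam_pos by (simp add: field_simps)
  qed
  have "bounded (range Y)"
  proof (rule boundedI)
    fix y assume "y \<in> range Y"
    then obtain n where n: "y = Y n" by auto
    have "norm (Y n - x) \<le> sqrt (2 * lam * (I + 1 - m))"
      using bnd[of n] by (simp add: real_le_rsqrt)
    then show "norm y \<le> norm x + sqrt (2 * lam * (I + 1 - m))"
      unfolding n using norm_triangle_sub[of "Y n" x] by linarith
  qed
  then obtain l r where r: "strict_mono r" and lim: "(Y \<circ> r) \<longlonglongrightarrow> l"
    using bounded_imp_convergent_subsequence by blast
  define T where "T n = I + inverse (real (Suc (r n))) - (norm (Y (r n) - x))\<^sup>2 / (2 * lam)" for n
  have limP: "(\<lambda>n. (Y (r n), T n)) \<longlonglongrightarrow> (l, I + 0 - (norm (l - x))\<^sup>2 / (2 * lam))"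
    unfolding T_def
  proof (intro tendsto_Pair tendsto_diff tendsto_add tendsto_const tendsto_divide tendsto_power tendsto_norm)
    show "(\<lambda>n. Y (r n)) \<longlonglongrightarrow> l" using lim by (simp add: comp_def)
    show "(\<lambda>n. inverse (real (Suc (r n)))) \<longlonglongrightarrow> 0"
      using LIMSEQ_subseq_LIMSEQ[OF LIMSEQ_inverse_real_of_nat r] by (simp add: comp_def)
    show "(\<lambda>n. Y (r n)) \<longlonglongrightarrow> l" using lim by (simp add: comp_def)
  qed (use lam_pos in auto)
  have inE: "(Y (r n), T n) \<in> epigraph psi" for n
    using sY[of "r n"] s[of "r n"] by (auto simp: epigraph_def T_def)
  have "(l, I + 0 - (norm (l - x))\<^sup>2 / (2 * lam)) \<in> epigraph psi"
    by (rule closed_sequentially[OF closed[unfolded closed_fun_def] inE limP])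
  then have "psi l \<le> ereal (I - (norm (l - x))\<^sup>2 / (2 * lam))" by (simp add: epigraph_def)
  then have "F x l \<le> ereal (I - (norm (l - x))\<^sup>2 / (2 * lam)) + ereal ((norm (l - x))\<^sup>2 / (2 * lam))"
    unfolding F_def by (rule add_right_mono)
  then have "F x l \<le> Ie" using I by simp
  moreover have "Ie \<le> F x z" for z unfolding Ie_def by (rule INF_lower) auto
  ultimately show ?thesis by (meson order_trans)
qed

lemma norm_mid:
  fixes u v :: 'a
  shows "(norm ((1/2) *\<^sub>R u + (1/2) *\<^sub>R v))\<^sup>2 = ((norm u)\<^sup>2 + (norm v)\<^sup>2) / 2 - (norm (u - v))\<^sup>2 / 4"
  by (simp add: power2_norm_eq_inner inner_add_left inner_add_right inner_diff_left inner_diff_right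
      inner_commute field_simps)

lemma mul_aux: "(lam::real) > 0 \<Longrightarrow> a + N0 / (2 * lam) \<le> Y + X / (2 * lam) \<Longrightarrow> 2 * lam * a + N0 \<le> 2 * lam * Y + X"
proof -
  assume l: "lam > 0" and h: "a + N0 / (2 * lam) \<le> Y + X / (2 * lam)"
  have "2 * lam * (a + N0 / (2 * lam)) \<le> 2 * lam * (Y + X / (2 * lam))"
    using l h by (intro mult_left_mono) auto
  then show ?thesis using l by (simp add: distrib_left)
qed

lemma lin_aux: "(a::real) + P \<le> (1-1/2)*a + 1/2*b + C \<Longrightarrow> C = (P+Q)/2 - E \<Longrightarrow> a + P = b + Q \<Longrightarrow> E \<le> 0"
  by (simp add: field_simps)

lemma unique_min:
  assumes p: "\<forall>z. F x p \<le> F x z" and q: "\<forall>z. F x q \<le> F x z"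
  shows "p = q"
proof -
  obtain y0 where y0: "psi y0 < \<infinity>" using proper by (auto simp: proper_fun_def)
  have "F x p \<le> F x y0" using p by auto
  then have "psi p \<noteq> \<infinity>" using y0 by (auto simp: F_def)
  then obtain a where a: "psi p = ereal a" using psi_finite by auto
  have "F x q \<le> F x y0" using q by auto
  then have "psi q \<noteq> \<infinity>" using y0 by (auto simp: F_def)
  then obtain b where b: "psi q = ereal b" using psi_finite by auto
  have eq: "a + (norm (p - x))\<^sup>2 / (2 * lam) = b + (norm (q - x))\<^sup>2 / (2 * lam)"
    using p[rule_format, of q] q[rule_format, of p] a b by (simp add: F_def)
  define c where "c = (1 - 1/2) *\<^sub>R p + (1/2) *\<^sub>R q"
  have pc: "psi c \<le> ereal ((1 - 1/2) * a + 1/2 * b)" unfolding c_def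
    by (rule psi_conv[OF a b]) auto
  have "c - x = (1/2) *\<^sub>R (p - x) + (1/2) *\<^sub>R (q - x)" unfolding c_def by (simp add: algebra_simps) (simp flip: scaleR_add_left)
  then have nc: "(norm (c - x))\<^sup>2 = ((norm (p - x))\<^sup>2 + (norm (q - x))\<^sup>2) / 2 - (norm (p - q))\<^sup>2 / 4"
    using norm_mid[of "p - x" "q - x"] by simp
  have "F x p \<le> F x c" using p by auto
  also have "F x c \<le> ereal ((1 - 1/2) * a + 1/2 * b) + ereal ((norm (c - x))\<^sup>2 / (2 * lam))"
    unfolding F_def by (rule add_right_mono[OF pc])
  finally have "a + (norm (p - x))\<^sup>2 / (2 * lam) \<le> (1 - 1/2) * a + 1/2 * b + (norm (c - x))\<^sup>2 / (2 * lam)"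
    using a by (simp add: F_def)
  moreover have "(norm (c - x))\<^sup>2 / (2 * lam) = ((norm (p - x))\<^sup>2 / (2 * lam) + (norm (q - x))\<^sup>2 / (2 * lam)) / 2 - (norm (p - q))\<^sup>2 / (8 * lam)"
    using lam_pos by (simp add: nc field_simps)
  ultimately have "(norm (p - q))\<^sup>2 / (8 * lam) \<le> 0"
    using eq lin_aux by blast
  then have "(norm (p - q))\<^sup>2 \<le> 0" using lam_pos by (simp add: divide_le_0_iff)
  then show ?thesis by simp
qed

lemma prox_min: "\<forall>z. F x (prox lam psi x) \<le> F x z"
proof -
  have "\<exists>!p. \<forall>z. F x p \<le> F x z"
    using exists_min[of x] unique_min[of x] by blast
  then show ?thesis unfolding prox_def F_def[symmetric] by (rule theI')
qed

lemma prox_fin: "\<exists>a. psi (prox lam psi x) = ereal a \<and> m \<le> a"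
proof -
  obtain y0 where y0: "psi y0 < \<infinity>" using proper by (auto simp: proper_fun_def)
  have "F x (prox lam psi x) \<le> F x y0" using prox_min by auto
  then have "psi (prox lam psi x) \<noteq> \<infinity>" using y0 by (auto simp: F_def)
  then show ?thesis using psi_finite by auto
qed

definition pv :: "'a \<Rightarrow> real" where "pv x = real_of_ereal (psi (prox lam psi x))"

lemma pv: "psi (prox lam psi x) = ereal (pv x)" "m \<le> pv x"
  using prox_fin[of x] by (auto simp: pv_def)

lemma env_eq: "moreau_env lam psi x = pv x + (norm (prox lam psi x - x))\<^sup>2 / (2 * lam)"
proof -
  have "(INF y. F x y) = F x (prox lam psi x)"
    using prox_min[of x] by (intro antisym INF_lower INF_greatest) auto
  then show ?thesis unfolding moreau_env_def F_def[symmetric] by (simp add: F_def pv)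
qed

lemma env_le: "psi z = ereal b \<Longrightarrow> moreau_env lam psi x \<le> b + (norm (z - x))\<^sup>2 / (2 * lam)"
proof -
  assume z: "psi z = ereal b"
  have "F x (prox lam psi x) \<le> F x z" using prox_min by auto
  then show ?thesis by (simp add: F_def env_eq pv z)
qed

lemma env_ge: "moreau_env lam psi x \<ge> m"
proof -
  have "0 \<le> (norm (prox lam psi x - x))\<^sup>2 / (2 * lam)" using lam_pos by simp
  then show ?thesis using pv[of x] by (simp add: env_eq)
qed

lemma var_ineq:
  assumes z: "psi z = ereal b"
  shows "lam * (pv x - b) \<le> inner (prox lam psi x - x) (z - prox lam psi x)"
proof (rule ccontr)
  define p where "p = prox lam psi x"
  define a where "a = pv x"
  define ip where "ip = inner (p - x) (z - p)"
  define D where "D = (norm (z - p))\<^sup>2"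
  define N0 where "N0 = (norm (p - x))\<^sup>2"
  have a: "psi p = ereal a" using pv unfolding p_def a_def by auto
  assume "\<not> ?thesis"
  then have e: "lam * (a - b) - ip > 0" unfolding a_def ip_def p_def by simp
  define t where "t = min 1 ((lam * (a - b) - ip) / (D + 1))"
  have D0: "D \<ge> 0" unfolding D_def by simp
  have t0: "t > 0" using e D0 unfolding t_def by auto
  have t1: "t \<le> 1" unfolding t_def by auto
  have tD: "t * D < lam * (a - b) - ip"
  proof -
    have "t * D \<le> ((lam * (a - b) - ip) / (D + 1)) * D" unfolding t_def
      using D0 by (intro mult_right_mono) auto
    also have "\<dots> < lam * (a - b) - ip" using e D0 by (simp add: field_simps)
    finally show ?thesis .
  qed
  define pt where "pt = (1 - t) *\<^sub>R p + t *\<^sub>R z"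
  have ps: "psi pt \<le> ereal ((1 - t) * a + t * b)"
    unfolding pt_def by (rule psi_conv[OF a z]) (use t0 t1 in auto)
  have e1: "pt - x = (p - x) + t *\<^sub>R (z - p)" unfolding pt_def by (simp add: algebra_simps)
  have "(norm (pt - x))\<^sup>2 = (norm ((p - x) + t *\<^sub>R (z - p)))\<^sup>2" by (simp only: e1)
  also have "\<dots> = N0 + 2 * t * ip + t * t * D"
    unfolding N0_def ip_def D_def
    by (simp add: power2_norm_eq_inner inner_add_left inner_add_right inner_commute algebra_simps)
  finally have npt: "(norm (pt - x))\<^sup>2 = N0 + 2 * t * ip + t\<^sup>2 * D" by (simp add: power2_eq_square)
  have "F x p \<le> F x pt" using prox_min[of x] unfolding p_def by auto
  also have "F x pt \<le> ereal ((1 - t) * a + t * b) + ereal ((norm (pt - x))\<^sup>2 / (2 * lam))"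
    unfolding F_def by (rule add_right_mono[OF ps])
  finally have "a + N0 / (2 * lam) \<le> (1 - t) * a + t * b + (N0 + 2 * t * ip + t\<^sup>2 * D) / (2 * lam)"
    using a npt by (simp add: F_def N0_def)
  then have "2 * lam * a + N0 \<le> 2 * lam * ((1 - t) * a + t * b) + (N0 + 2 * t * ip + t\<^sup>2 * D)"
    using lam_pos by (intro mul_aux) auto
  moreover have "2 * lam * ((1 - t) * a + t * b) = 2 * lam * a - t * (2 * lam * (a - b))"
    by (simp add: algebra_simps)
  moreover have "t\<^sup>2 * D = t * (t * D)" by (simp add: power2_eq_square)
  ultimately have "t * (2 * lam * (a - b)) \<le> t * (2 * ip + t * D)"
    by (simp add: distrib_left)
  then have "2 * lam * (a - b) \<le> 2 * ip + t * D" using t0 by simp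
  then show False using tD e by linarith
qed

lemma prox_nonexp: "norm (prox lam psi x - prox lam psi y) \<le> norm (x - y)"
proof -
  define p where "p = prox lam psi x"
  define q where "q = prox lam psi y"
  have 1: "lam * (pv x - pv y) \<le> inner (p - x) (q - p)"
    unfolding p_def q_def by (rule var_ineq[OF pv(1)])
  have 2: "lam * (pv y - pv x) \<le> inner (q - y) (p - q)"
    unfolding p_def q_def by (rule var_ineq[OF pv(1)])
  have "inner (p - x) (q - p) + inner (q - y) (p - q) = inner (x - y) (p - q) - (norm (p - q))\<^sup>2"
    by (simp add: power2_norm_eq_inner inner_diff_left inner_diff_right inner_commute algebra_simps)
  then have "(norm (p - q))\<^sup>2 \<le> inner (x - y) (p - q)" using 1 2 lam_pos
    by (simp add: algebra_simps)
  also have "\<dots> \<le> norm (x - y) * norm (p - q)" by (rule norm_cauchy_schwarz)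
  finally have "norm (p - q) * norm (p - q) \<le> norm (x - y) * norm (p - q)"
    by (simp add: power2_eq_square)
  then show ?thesis unfolding p_def q_def
    by (cases "norm (prox lam psi x - prox lam psi y) = 0") auto
qed

lemma prox_cont: "continuous_on UNIV (prox lam psi)"
proof (rule lipschitz_on_continuous_on)
  show "1-lipschitz_on UNIV (prox lam psi)"
    by (rule lipschitz_onI) (auto simp: dist_norm prox_nonexp)
qed

lemma sq_diff_le: "(norm (u::'a))\<^sup>2 - (norm v)\<^sup>2 \<le> norm (u - v) * (norm u + norm v)"
proof -
  have "(norm u)\<^sup>2 - (norm v)\<^sup>2 = (norm u - norm v) * (norm u + norm v)"
    by (simp add: power2_eq_square algebra_simps)
  also have "\<dots> \<le> norm (u - v) * (norm u + norm v)"
    by (intro mult_right_mono) (auto simp: norm_triangle_ineq2)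
  finally show ?thesis .
qed

lemma env_diff: "moreau_env lam psi x - moreau_env lam psi y
   \<le> norm (x - y) * (norm (prox lam psi y - x) + norm (prox lam psi y - y)) / (2 * lam)"
proof -
  have "moreau_env lam psi x \<le> pv y + (norm (prox lam psi y - x))\<^sup>2 / (2 * lam)"
    by (rule env_le[OF pv(1)])
  then have "moreau_env lam psi x - moreau_env lam psi y
      \<le> ((norm (prox lam psi y - x))\<^sup>2 - (norm (prox lam psi y - y))\<^sup>2) / (2 * lam)"
    by (simp add: env_eq[of y] diff_divide_distrib)
  also have "\<dots> \<le> norm ((prox lam psi y - x) - (prox lam psi y - y)) * (norm (prox lam psi y - x) + norm (prox lam psi y - y)) / (2 * lam)"
    using lam_pos by (intro divide_right_mono sq_diff_le) auto
  also have "(prox lam psi y - x) - (prox lam psi y - y) = -(x - y)" by simp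
  finally show ?thesis by (simp only: norm_minus_cancel)
qed

lemma env_cont: "continuous_on UNIV (moreau_env lam psi)"
proof (intro continuous_at_imp_continuous_on ballI)
  fix x :: 'a
  let ?e = "moreau_env lam psi"
  let ?p = "prox lam psi"
  define G where "G y = (norm (?p y - x) + norm (?p y - y) + norm (?p x - y) + norm (?p x - x)) / (2 * lam)" for y
  have pc: "isCont ?p y" for y using prox_cont by (simp add: continuous_on_eq_continuous_at)
  have Gc: "(G \<longlongrightarrow> G x) (at x)" unfolding G_def
    by (intro tendsto_intros isCont_tendsto_compose[OF pc] tendsto_ident_at) (use lam_pos in auto)
  have "((\<lambda>y. norm (y - x) * G y) \<longlongrightarrow> norm (x - x) * G x) (at x)"
    by (intro tendsto_intros Gc)
  then have lim0: "((\<lambda>y. norm (y - x) * G y) \<longlongrightarrow> 0) (at x)" by simp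
  have "((\<lambda>y. ?e y - ?e x) \<longlongrightarrow> 0) (at x)"
  proof (rule Lim_null_comparison[OF _ lim0], rule always_eventually, rule allI)
    fix y
    have 1: "?e y - ?e x \<le> norm (y - x) * (norm (?p x - y) + norm (?p x - x)) / (2 * lam)"
      by (rule env_diff)
    have 2: "?e x - ?e y \<le> norm (x - y) * (norm (?p y - x) + norm (?p y - y)) / (2 * lam)"
      by (rule env_diff)
    have "norm (y - x) * (norm (?p x - y) + norm (?p x - x)) / (2 * lam) \<le> norm (y - x) * G y"
      unfolding G_def times_divide_eq_right using lam_pos by (intro divide_right_mono mult_left_mono) auto
    moreover have "norm (x - y) * (norm (?p y - x) + norm (?p y - y)) / (2 * lam) \<le> norm (y - x) * G y"
      unfolding G_def times_divide_eq_right norm_minus_commute[of x y] using lam_pos by (intro divide_right_mono mult_left_mono) auto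
    ultimately show "norm (?e y - ?e x) \<le> norm (y - x) * G y" using 1 2 by auto
  qed
  then show "isCont ?e x" by (simp add: isCont_def LIM_zero_iff)
qed

lemma prox_bound: "norm (prox lam psi x) \<le> norm (prox lam psi 0) + norm x"
  using prox_nonexp[of x 0] norm_triangle_sub[of "prox lam psi x" "prox lam psi 0"] by simp

end

lemma arith_A1:
  fixes bb KK gg RR ss :: real
  assumes "RR \<le> ss" "0 \<le> bb" "0 \<le> KK" "gg \<le> 1" "0 \<le> RR"
  shows "2 + 2 * bb * KK + bb * gg * ss \<le> ((2 + 2 * bb * KK + bb * gg * RR) / (2 + bb * RR)) * (2 + bb * ss)"
proof -
  have D: "0 < 2 + bb * RR" using assms by (simp add: add_pos_nonneg)
  have eq: "(2 + 2 * bb * KK + bb * gg * ss) * (2 + bb * RR) - (2 + 2 * bb * KK + bb * gg * RR) * (2 + bb * ss) = (bb * (ss-RR)) * (2 * gg - 2 - 2 * bb * KK)"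
    by (simp add: algebra_simps)
  have bk: "0 \<le> bb * KK" using assms by simp
  have n1: "2 * gg - 2 - 2 * bb * KK \<le> 0" using bk assms by linarith
  have n2: "0 \<le> bb * (ss-RR)" using assms by simp
  have "(bb * (ss-RR)) * (2 * gg - 2 - 2 * bb * KK) \<le> 0" by (rule mult_nonneg_nonpos[OF n2 n1])
  then have "(2 + 2 * bb * KK + bb * gg * ss) * (2 + bb * RR) \<le> (2 + 2 * bb * KK + bb * gg * RR) * (2 + bb * ss)" using eq by linarith
  then show ?thesis using D by (simp add: le_divide_eq mult.commute mult.left_commute)
qed
lemma arith_A2:
  fixes M b s a g ab :: real
  assumes "0 \<le> M" "0 \<le> b" "0 \<le> s" "1 - a/2 \<le> ab" "g \<le> ab"
  shows "M * (2 - a + b * g * s) \<le> ab * M * (2 + b * s)"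
proof -
  have "b * s * g \<le> b * s * ab" using assms by (intro mult_left_mono) auto
  then have "2 - a + b * g * s \<le> ab * (2 + b * s)" using assms by (simp add: algebra_simps)
  then have "M * (2 - a + b * g * s) \<le> M * (ab * (2 + b * s))" using assms by (intro mult_left_mono) auto
  then show ?thesis by (simp add: mult_ac)
qed

locale harris =
  fixes k :: "'a::euclidean_space \<Rightarrow> 'a \<Rightarrow> real" and V :: "'a \<Rightarrow> real"
    and dens :: "'a \<Rightarrow> real" and gam Kc :: real
  assumes k_nn: "\<And>x y. 0 \<le> k x y"
    and k_meas: "case_prod k \<in> borel_measurable (lborel \<Otimes>\<^sub>M lborel)"
    and k_int: "\<And>x. integrable lborel (k x)"
    and k_le1: "\<And>x. (\<integral>y. k x y \<partial>lborel) \<le> 1"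
    and V_ge: "\<And>x. 1 \<le> V x"
    and V_meas: "V \<in> borel_measurable borel"
    and kV_int: "\<And>x. integrable lborel (\<lambda>y. k x y * V y)"
    and drift: "\<And>x. (\<integral>y. k x y * V y \<partial>lborel) + (1 - (\<integral>y. k x y \<partial>lborel)) * V x \<le> gam * V x + Kc"
    and gam: "0 \<le> gam" "gam < 1"
    and Kc: "0 < Kc"
    and minor: "\<And>R. \<exists>\<delta> B. 0 < \<delta> \<and> B \<in> sets lborel \<and> 0 < measure lborel B \<and> emeasure lborel B < \<infinity>
                      \<and> (\<forall>x. V x \<le> R \<longrightarrow> (\<forall>y\<in>B. \<delta> \<le> k x y))"
    and dens_nn: "\<And>x. 0 \<le> dens x"
    and dens_meas: "dens \<in> borel_measurable borel"
    and dens_int: "integrable lborel dens"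
    and dens_one: "(\<integral>x. dens x \<partial>lborel) = 1"
    and densV_int: "integrable lborel (\<lambda>x. dens x * V x)"
    and balance: "\<And>x y. dens x * k x y = dens y * k y x"
begin

definition P :: "('a \<Rightarrow> real) \<Rightarrow> 'a \<Rightarrow> real" where
  "P f x = (\<integral>y. k x y * f y \<partial>lborel) + (1 - (\<integral>y. k x y \<partial>lborel)) * f x"

definition good :: "('a \<Rightarrow> real) \<Rightarrow> bool" where
  "good f \<longleftrightarrow> f \<in> borel_measurable borel \<and> (\<exists>C. \<forall>y. \<bar>f y\<bar> \<le> C * V y)"

lemma V_meas'[measurable]: "V \<in> borel_measurable lborel"
  using V_meas by simp

lemma k_meas1[measurable]: "k x \<in> borel_measurable lborel"
  using k_int by (rule borel_measurable_integrable)

lemma good_int: assumes "good f" shows "integrable lborel (\<lambda>y. k x y * f y)"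
proof -
  from assms obtain C where f[measurable]: "f \<in> borel_measurable borel" and C: "\<And>y. \<bar>f y\<bar> \<le> C * V y"
    unfolding good_def by blast
  show ?thesis
  proof (rule Bochner_Integration.integrable_bound)
    show "integrable lborel (\<lambda>y. \<bar>C\<bar> * (k x y * V y))" using kV_int by simp
    show "(\<lambda>y. k x y * f y) \<in> borel_measurable lborel" using f by simp
    show "AE y in lborel. norm (k x y * f y) \<le> norm (\<bar>C\<bar> * (k x y * V y))"
    proof (rule AE_I2)
      fix y
      have "\<bar>k x y * f y\<bar> = k x y * \<bar>f y\<bar>" using k_nn by (simp add: abs_mult)
      also have "\<dots> \<le> k x y * (C * V y)" using k_nn C by (intro mult_left_mono) auto
      also have "\<dots> \<le> k x y * (\<bar>C\<bar> * V y)" using k_nn V_ge[of y]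
        by (intro mult_left_mono mult_right_mono) auto
      also have "\<dots> = \<bar>C\<bar> * (k x y * V y)" by (simp add: mult_ac)
      finally show "norm (k x y * f y) \<le> norm (\<bar>C\<bar> * (k x y * V y))"
        using k_nn V_ge[of y] by simp
    qed
  qed
qed

lemma good_bounded:
  assumes "f \<in> borel_measurable borel" "\<And>y. \<bar>f y\<bar> \<le> Bd"
  shows "good f"
proof -
  have "\<bar>f y\<bar> \<le> \<bar>Bd\<bar> * V y" for y
  proof -
    have "\<bar>f y\<bar> \<le> \<bar>Bd\<bar>" using assms(2)[of y] by linarith
    also have "\<dots> \<le> \<bar>Bd\<bar> * V y" using V_ge[of y] by (simp add: mult_le_cancel_left1)
    finally show ?thesis .
  qed
  then show ?thesis unfolding good_def using assms(1) by blast
qed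

lemma good_V: "good V"
  unfolding good_def
proof (intro conjI exI[of _ 1] allI V_meas)
  fix y show "\<bar>V y\<bar> \<le> 1 * V y" using V_ge[of y] by simp
qed

lemma meas_pair:
  fixes g :: "'a \<Rightarrow> 'a \<Rightarrow> real"
  shows "(\<lambda>p. g (fst p) (snd p)) \<in> borel_measurable (lborel \<Otimes>\<^sub>M lborel) \<longleftrightarrow>
   (\<lambda>p. g (fst p) (snd p)) \<in> borel_measurable (borel :: ('a \<times> 'a) measure)"
proof -
  have "sets (lborel \<Otimes>\<^sub>M lborel) = sets (borel \<Otimes>\<^sub>M (borel :: 'a measure))"
    by (intro sets_pair_measure_cong) auto
  also have "\<dots> = sets (borel :: ('a \<times> 'a) measure)" by (simp only: borel_prod)
  finally have S: "sets (lborel \<Otimes>\<^sub>M lborel) = sets (borel :: ('a \<times> 'a) measure)" .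
  show ?thesis using measurable_cong_sets[OF S refl, where N="borel :: real measure"] by simp
qed

lemma k_meas2[measurable]: "(\<lambda>p. k (fst p) (snd p)) \<in> borel_measurable (lborel \<Otimes>\<^sub>M lborel)"
  using k_meas by (simp add: case_prod_beta')

lemma P_meas: assumes "good f" shows "P f \<in> borel_measurable borel"
proof -
  from assms have f[measurable]: "f \<in> borel_measurable borel" unfolding good_def by blast
  have "(\<lambda>x. \<integral>y. k x y * f y \<partial>lborel) \<in> borel_measurable lborel"
    by (rule lborel.borel_measurable_lebesgue_integral) measurable
  moreover have "(\<lambda>x. \<integral>y. k x y \<partial>lborel) \<in> borel_measurable lborel"
    by (rule lborel.borel_measurable_lebesgue_integral) measurable
  ultimately have "P f \<in> borel_measurable lborel" unfolding P_def[abs_def] by measurable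
  then show ?thesis by simp
qed

lemma P_shift:
  assumes "good f"
  shows "P (\<lambda>y. f y - c) x = P f x - c"
proof -
  have i: "integrable lborel (\<lambda>y. k x y * f y)" by (rule good_int[OF assms])
  have "(\<integral>y. k x y * (f y - c) \<partial>lborel) = (\<integral>y. k x y * f y - k x y * c \<partial>lborel)"
    by (simp add: algebra_simps)
  also have "\<dots> = (\<integral>y. k x y * f y \<partial>lborel) - (\<integral>y. k x y \<partial>lborel) * c"
    using i k_int by simp
  finally show ?thesis unfolding P_def by (simp add: algebra_simps)
qed

lemma r_nn: "0 \<le> 1 - (\<integral>y. k x y \<partial>lborel)"
  using k_le1[of x] by simp

lemma PV_eq: "P V x = (\<integral>y. k x y * V y \<partial>lborel) + (1 - (\<integral>y. k x y \<partial>lborel)) * V x"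
  unfolding P_def ..

lemma PV_le: "P V x \<le> gam * V x + Kc"
  using drift[of x] unfolding P_def .

lemma P_abs_bound:
  assumes g: "good f" and M: "0 \<le> M" and b: "0 \<le> \<beta>"
    and fb: "\<And>y. \<bar>f y\<bar> \<le> M * (1 + \<beta> * V y)"
  shows "\<bar>P f x\<bar> \<le> M + M * \<beta> * P V x"
proof -
  let ?r = "1 - (\<integral>y. k x y \<partial>lborel)"
  have i: "integrable lborel (\<lambda>y. k x y * f y)" by (rule good_int[OF g])
  have ig: "integrable lborel (\<lambda>y. M * k x y + (M * \<beta>) * (k x y * V y))"
    using k_int kV_int by simp
  have "\<bar>\<integral>y. k x y * f y \<partial>lborel\<bar> \<le> (\<integral>y. M * k x y + (M * \<beta>) * (k x y * V y) \<partial>lborel)"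
  proof (rule integral_abs_bound_integral[OF i ig])
    fix y
    have "\<bar>k x y * f y\<bar> = k x y * \<bar>f y\<bar>" using k_nn by (simp add: abs_mult)
    also have "\<dots> \<le> k x y * (M * (1 + \<beta> * V y))" using k_nn fb by (intro mult_left_mono) auto
    also have "\<dots> = M * k x y + (M * \<beta>) * (k x y * V y)" by (simp add: algebra_simps)
    finally show "\<bar>k x y * f y\<bar> \<le> M * k x y + (M * \<beta>) * (k x y * V y)" .
  qed
  also have "\<dots> = M * (\<integral>y. k x y \<partial>lborel) + (M * \<beta>) * (\<integral>y. k x y * V y \<partial>lborel)"
    using k_int kV_int by simp
  finally have 1: "\<bar>\<integral>y. k x y * f y \<partial>lborel\<bar> \<le> M * (\<integral>y. k x y \<partial>lborel) + (M * \<beta>) * (\<integral>y. k x y * V y \<partial>lborel)" .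
  have "\<bar>?r * f x\<bar> = ?r * \<bar>f x\<bar>" using r_nn[of x] by (simp add: abs_mult)
  also have "\<dots> \<le> ?r * (M * (1 + \<beta> * V x))" using r_nn[of x] fb by (intro mult_left_mono) auto
  finally have 2: "\<bar>?r * f x\<bar> \<le> ?r * (M * (1 + \<beta> * V x))" .
  have "\<bar>P f x\<bar> \<le> \<bar>\<integral>y. k x y * f y \<partial>lborel\<bar> + \<bar>?r * f x\<bar>"
    unfolding P_def by (rule abs_triangle_ineq)
  also have "\<dots> \<le> M * (\<integral>y. k x y \<partial>lborel) + (M * \<beta>) * (\<integral>y. k x y * V y \<partial>lborel) + ?r * (M * (1 + \<beta> * V x))"
    using 1 2 by linarith
  also have "\<dots> = M + M * \<beta> * P V x" unfolding P_def by (simp add: algebra_simps)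
  finally show ?thesis .
qed

lemma P_minor_bound:
  assumes g: "good f" and M: "0 \<le> M" and b: "0 \<le> \<beta>"
    and fb: "\<And>y. \<bar>f y\<bar> \<le> M * (1 + \<beta> * V y)"
    and d: "0 < \<delta>" and B: "B \<in> sets lborel" "emeasure lborel B < \<infinity>"
    and kB: "\<And>y. y \<in> B \<Longrightarrow> \<delta> \<le> k x y"
  shows "\<bar>P f x - \<delta> * (\<integral>y. indicator B y * f y \<partial>lborel)\<bar>
          \<le> M * (1 - \<delta> * measure lborel B) + M * \<beta> * P V x"
proof -
  let ?r = "1 - (\<integral>y. k x y \<partial>lborel)"
  let ?g = "\<lambda>y. k x y - \<delta> * indicator B y"
  have [measurable]: "B \<in> sets borel" using B by simp
  have fm[measurable]: "f \<in> borel_measurable borel" using g unfolding good_def by blast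
  have gnn: "0 \<le> ?g y" for y using kB[of y] k_nn[of x y] by (cases "y \<in> B") auto
  have i: "integrable lborel (\<lambda>y. k x y * f y)" by (rule good_int[OF g])
  have iB: "integrable lborel (indicator B :: 'a \<Rightarrow> real)"
    using B by (simp add: integrable_indicator_iff less_top)
  have iBV: "integrable lborel (\<lambda>y. indicator B y * V y)"
  proof (rule Bochner_Integration.integrable_bound)
    show "integrable lborel (\<lambda>y. (1/\<delta>) * (k x y * V y))" using kV_int by simp
    show "(\<lambda>y. indicator B y * V y) \<in> borel_measurable lborel" by measurable
    show "AE y in lborel. norm (indicator B y * V y) \<le> norm ((1/\<delta>) * (k x y * V y))"
    proof (rule AE_I2)
      fix y
      have "indicator B y * V y \<le> (1/\<delta>) * (k x y * V y)"
      proof (cases "y \<in> B")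
        case True
        have "1 * V y \<le> (k x y / \<delta>) * V y" using kB[OF True] d V_ge[of y]
          by (intro mult_right_mono) (auto simp: field_simps)
        then show ?thesis using True by simp
      next
        case False
        have "0 \<le> k x y * V y" using k_nn[of x y] V_ge[of y] by simp
        then show ?thesis using False d by simp
      qed
      then show "norm (indicator B y * V y) \<le> norm ((1/\<delta>) * (k x y * V y))"
        using V_ge[of y] k_nn[of x y] d by (simp add: abs_of_nonneg indicator_def)
    qed
  qed
  have iBf: "integrable lborel (\<lambda>y. indicator B y * f y)"
  proof (rule Bochner_Integration.integrable_bound)
    show "integrable lborel (\<lambda>y. M * indicator B y + (M * \<beta>) * (indicator B y * V y))"
      using iB iBV by simp
    show "(\<lambda>y. indicator B y * f y) \<in> borel_measurable lborel" by measurable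
    show "AE y in lborel. norm (indicator B y * f y) \<le> norm (M * indicator B y + (M * \<beta>) * (indicator B y * V y))"
    proof (rule AE_I2)
      fix y
      have "\<bar>indicator B y * f y\<bar> \<le> indicator B y * (M * (1 + \<beta> * V y))"
        using fb[of y] by (cases "y \<in> B") auto
      also have "\<dots> = M * indicator B y + (M * \<beta>) * (indicator B y * V y)" by (simp add: algebra_simps)
      finally show "norm (indicator B y * f y) \<le> norm (M * indicator B y + (M * \<beta>) * (indicator B y * V y))"
        by simp
    qed
  qed
  have "integrable lborel (\<lambda>y. k x y * f y - \<delta> * (indicator B y * f y))"
    using i iBf by simp
  then have ig: "integrable lborel (\<lambda>y. ?g y * f y)"
    by (simp add: algebra_simps)
  have eq1: "(\<integral>y. ?g y * f y \<partial>lborel) = (\<integral>y. k x y * f y \<partial>lborel) - \<delta> * (\<integral>y. indicator B y * f y \<partial>lborel)"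
  proof -
    have "(\<integral>y. ?g y * f y \<partial>lborel) = (\<integral>y. k x y * f y - \<delta> * (indicator B y * f y) \<partial>lborel)"
      by (simp add: algebra_simps)
    also have "\<dots> = (\<integral>y. k x y * f y \<partial>lborel) - \<delta> * (\<integral>y. indicator B y * f y \<partial>lborel)"
      using i iBf by simp
    finally show ?thesis .
  qed
  have ib: "integrable lborel (\<lambda>y. M * ?g y + (M * \<beta>) * (?g y * V y))"
    using k_int kV_int iB iBV by (simp add: algebra_simps)
  have "\<bar>\<integral>y. ?g y * f y \<partial>lborel\<bar> \<le> (\<integral>y. M * ?g y + (M * \<beta>) * (?g y * V y) \<partial>lborel)"
  proof (rule integral_abs_bound_integral[OF ig ib])
    fix y
    have "\<bar>?g y * f y\<bar> = ?g y * \<bar>f y\<bar>" using gnn[of y] by (simp add: abs_mult)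
    also have "\<dots> \<le> ?g y * (M * (1 + \<beta> * V y))" using gnn[of y] fb by (intro mult_left_mono) auto
    also have "\<dots> = M * ?g y + (M * \<beta>) * (?g y * V y)" by (simp add: algebra_simps)
    finally show "\<bar>?g y * f y\<bar> \<le> M * ?g y + (M * \<beta>) * (?g y * V y)" .
  qed
  also have "\<dots> = M * ((\<integral>y. k x y \<partial>lborel) - \<delta> * measure lborel B)
      + (M * \<beta>) * ((\<integral>y. k x y * V y \<partial>lborel) - \<delta> * (\<integral>y. indicator B y * V y \<partial>lborel))"
  proof -
    have "(\<integral>y. M * ?g y + (M * \<beta>) * (?g y * V y) \<partial>lborel)
        = (\<integral>y. M * k x y - (M * \<delta>) * indicator B y + (M * \<beta>) * (k x y * V y) - (M * \<beta> * \<delta>) * (indicator B y * V y) \<partial>lborel)"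
      by (simp add: algebra_simps)
    also have "\<dots> = M * (\<integral>y. k x y \<partial>lborel) - (M * \<delta>) * (\<integral>y. indicator B y \<partial>lborel)
        + (M * \<beta>) * (\<integral>y. k x y * V y \<partial>lborel) - (M * \<beta> * \<delta>) * (\<integral>y. indicator B y * V y \<partial>lborel)"
      using k_int kV_int iB iBV by simp
    finally show ?thesis by (simp add: algebra_simps)
  qed
  also have "\<dots> \<le> M * ((\<integral>y. k x y \<partial>lborel) - \<delta> * measure lborel B) + (M * \<beta>) * (\<integral>y. k x y * V y \<partial>lborel)"
  proof -
    have "0 \<le> (\<integral>y. indicator B y * V y \<partial>lborel)"
    proof (rule Bochner_Integration.integral_nonneg)
      fix y have "0 \<le> V y" using V_ge[of y] by simp
      then show "0 \<le> indicator B y * V y" by simp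
    qed
    then have "0 \<le> (M * \<beta>) * (\<delta> * (\<integral>y. indicator B y * V y \<partial>lborel))"
      using M b d by simp
    then show ?thesis by (simp add: algebra_simps)
  qed
  finally have 1: "\<bar>\<integral>y. ?g y * f y \<partial>lborel\<bar> \<le> M * ((\<integral>y. k x y \<partial>lborel) - \<delta> * measure lborel B) + (M * \<beta>) * (\<integral>y. k x y * V y \<partial>lborel)" .
  have "\<bar>?r * f x\<bar> = ?r * \<bar>f x\<bar>" using r_nn[of x] by (simp add: abs_mult)
  also have "\<dots> \<le> ?r * (M * (1 + \<beta> * V x))" using r_nn[of x] fb by (intro mult_left_mono) auto
  finally have 2: "\<bar>?r * f x\<bar> \<le> ?r * (M * (1 + \<beta> * V x))" .
  have "P f x - \<delta> * (\<integral>y. indicator B y * f y \<partial>lborel) = (\<integral>y. ?g y * f y \<partial>lborel) + ?r * f x"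
    unfolding P_def eq1 by simp
  then have "\<bar>P f x - \<delta> * (\<integral>y. indicator B y * f y \<partial>lborel)\<bar> \<le> \<bar>\<integral>y. ?g y * f y \<partial>lborel\<bar> + \<bar>?r * f x\<bar>"
    by (metis abs_triangle_ineq)
  also have "\<dots> \<le> M * ((\<integral>y. k x y \<partial>lborel) - \<delta> * measure lborel B) + (M * \<beta>) * (\<integral>y. k x y * V y \<partial>lborel) + ?r * (M * (1 + \<beta> * V x))"
    using 1 2 by linarith
  also have "\<dots> = M * (1 - \<delta> * measure lborel B) + M * \<beta> * P V x" unfolding P_def by (simp add: algebra_simps)
  finally show ?thesis .
qed

lemma contraction:
  "\<exists>ab \<beta>. 0 \<le> ab \<and> ab < 1 \<and> 0 < \<beta> \<and>
     (\<forall>\<phi> Bd M. \<phi> \<in> borel_measurable borel \<longrightarrow> (\<forall>y. \<bar>\<phi> y\<bar> \<le> Bd) \<longrightarrow> 0 \<le> M \<longrightarrow>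
        (\<forall>x y. \<bar>\<phi> x - \<phi> y\<bar> \<le> M * (2 + \<beta> * V x + \<beta> * V y)) \<longrightarrow>
        (\<forall>x y. \<bar>P \<phi> x - P \<phi> y\<bar> \<le> ab * M * (2 + \<beta> * V x + \<beta> * V y)))"
proof -
  define R0 where "R0 = 4 * Kc / (1 - gam) + 1"
  have R0pos: "0 \<le> R0" using gam Kc unfolding R0_def by simp
  have R0eq: "(1 - gam) * R0 = 4 * Kc + (1 - gam)" using gam unfolding R0_def by (simp add: field_simps)
  obtain \<delta> B where d: "0 < \<delta>" and B: "B \<in> sets lborel" "0 < measure lborel B" "emeasure lborel B < \<infinity>"
    and kB: "\<And>x y. V x \<le> R0 \<Longrightarrow> y \<in> B \<Longrightarrow> \<delta> \<le> k x y"
    using minor[of R0] by blast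
  define \<alpha> where "\<alpha> = \<delta> * measure lborel B"
  have apos: "0 < \<alpha>" using d B unfolding \<alpha>_def by simp
  define \<beta> where "\<beta> = \<alpha> / (2 * Kc)"
  have bpos: "0 < \<beta>" using apos Kc unfolding \<beta>_def by simp
  have bK: "2 * \<beta> * Kc = \<alpha>" using Kc unfolding \<beta>_def by simp
  define ab1 where "ab1 = (2 + 2*\<beta>*Kc + \<beta>*gam*R0) / (2 + \<beta>*R0)"
  define ab2 where "ab2 = max (1 - \<alpha>/2) gam"
  define ab where "ab = max ab1 ab2"
  have ab1_lt: "ab1 < 1"
  proof -
    have D: "0 < 2 + \<beta>*R0" using bpos R0pos by (simp add: add_pos_nonneg)
    have "2*Kc + gam*R0 < R0" using R0eq gam Kc by (simp add: algebra_simps)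
    then have "\<beta> * (2*Kc + gam*R0) < \<beta> * R0" using bpos by simp
    then have "2 + 2*\<beta>*Kc + \<beta>*gam*R0 < 2 + \<beta>*R0" by (simp add: algebra_simps)
    then show ?thesis unfolding ab1_def using D by simp
  qed
  have ab_lt: "ab < 1" unfolding ab_def ab2_def using ab1_lt apos gam by auto
  have ab_ge: "0 \<le> ab" unfolding ab_def ab2_def using gam by auto
  have main: "\<bar>P \<phi> x - P \<phi> y\<bar> \<le> ab * M * (2 + \<beta> * V x + \<beta> * V y)"
    if phim: "\<phi> \<in> borel_measurable borel" and phib: "\<forall>y. \<bar>\<phi> y\<bar> \<le> Bd" and M: "0 \<le> M"
      and osc: "\<forall>x y. \<bar>\<phi> x - \<phi> y\<bar> \<le> M * (2 + \<beta> * V x + \<beta> * V y)" for \<phi> Bd M x y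
  proof -
    have Mw: "0 \<le> M * (1 + \<beta> * V z)" for z using M bpos V_ge[of z] by simp
    define c where "c = (SUP z. \<phi> z - M * (1 + \<beta> * V z))"
    have bdd: "bdd_above (range (\<lambda>z. \<phi> z - M * (1 + \<beta> * V z)))"
    proof (rule bdd_aboveI2)
      fix z show "\<phi> z - M * (1 + \<beta> * V z) \<le> Bd" using phib Mw[of z] by (smt (verit) abs_ge_self)
    qed
    have up: "\<phi> z - c \<le> M * (1 + \<beta> * V z)" for z
      using cSUP_upper[OF UNIV_I bdd, of z] unfolding c_def by simp
    have lo: "c \<le> \<phi> w + M * (1 + \<beta> * V w)" for w
      unfolding c_def
    proof (rule cSUP_least)
      fix z
      have "\<phi> z - \<phi> w \<le> M * (2 + \<beta> * V z + \<beta> * V w)" using osc by (smt (verit) abs_ge_self)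
      then show "\<phi> z - M * (1 + \<beta> * V z) \<le> \<phi> w + M * (1 + \<beta> * V w)" by (simp add: algebra_simps)
    qed simp
    define \<psi> where "\<psi> y = \<phi> y - c" for y
    have psib: "\<bar>\<psi> z\<bar> \<le> M * (1 + \<beta> * V z)" for z
      using up[of z] lo[of z] unfolding \<psi>_def by auto
    have gphi: "good \<phi>" by (rule good_bounded[OF phim]) (use phib in auto)
    have gpsi: "good \<psi>"
    proof (rule good_bounded)
      show "\<psi> \<in> borel_measurable borel" unfolding \<psi>_def[abs_def] using phim by measurable
      fix z show "\<bar>\<psi> z\<bar> \<le> Bd + \<bar>c\<bar>" unfolding \<psi>_def using phib[rule_format, of z] abs_triangle_ineq4[of "\<phi> z" c] by linarith
    qed
    have Pd: "P \<phi> x - P \<phi> y = P \<psi> x - P \<psi> y"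
      unfolding \<psi>_def using P_shift[OF gphi, of c x] P_shift[OF gphi, of c y] by simp
    let ?s = "V x + V y"
    have s0: "0 \<le> ?s" using V_ge[of x] V_ge[of y] by simp
    have PVs: "P V x + P V y \<le> gam * ?s + 2 * Kc" using PV_le[of x] PV_le[of y] by (simp add: algebra_simps)
    have Mb: "0 \<le> M * \<beta>" using M bpos by simp
    show ?thesis
    proof (cases "R0 \<le> ?s")
      case True
      have "\<bar>P \<psi> x - P \<psi> y\<bar> \<le> \<bar>P \<psi> x\<bar> + \<bar>P \<psi> y\<bar>" by (rule abs_triangle_ineq4)
      also have "\<dots> \<le> (M + M * \<beta> * P V x) + (M + M * \<beta> * P V y)"
        using P_abs_bound[OF gpsi M less_imp_le[OF bpos] psib, of x] P_abs_bound[OF gpsi M less_imp_le[OF bpos] psib, of y]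
        by linarith
      also have "\<dots> = 2 * M + (M * \<beta>) * (P V x + P V y)" by (simp add: algebra_simps)
      also have "\<dots> \<le> 2 * M + (M * \<beta>) * (gam * ?s + 2 * Kc)"
        using PVs Mb by (intro add_left_mono mult_left_mono) auto
      also have "\<dots> = M * (2 + 2*\<beta>*Kc + \<beta>*gam*?s)" by (simp add: algebra_simps)
      also have "\<dots> \<le> M * (ab1 * (2 + \<beta> * ?s))"
        unfolding ab1_def using M
        by (intro mult_left_mono arith_A1) (use True bpos Kc gam R0pos in auto)
      also have "\<dots> \<le> M * (ab * (2 + \<beta> * ?s))"
        using M bpos s0 unfolding ab_def by (intro mult_left_mono mult_right_mono) auto
      finally show ?thesis unfolding Pd by (simp add: algebra_simps)
    next
      case False
      have Vx: "V x \<le> R0" using False V_ge[of y] by simp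
      have Vy: "V y \<le> R0" using False V_ge[of x] by simp
      let ?J = "\<delta> * (\<integral>z. indicator B z * \<psi> z \<partial>lborel)"
      have 1: "\<bar>P \<psi> x - ?J\<bar> \<le> M * (1 - \<alpha>) + M * \<beta> * P V x"
        unfolding \<alpha>_def by (rule P_minor_bound[OF gpsi M less_imp_le[OF bpos] psib d B(1) B(3) kB[OF Vx]])
      have 2: "\<bar>P \<psi> y - ?J\<bar> \<le> M * (1 - \<alpha>) + M * \<beta> * P V y"
        unfolding \<alpha>_def by (rule P_minor_bound[OF gpsi M less_imp_le[OF bpos] psib d B(1) B(3) kB[OF Vy]])
      have "\<bar>P \<psi> x - P \<psi> y\<bar> \<le> \<bar>P \<psi> x - ?J\<bar> + \<bar>P \<psi> y - ?J\<bar>" by linarith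
      also have "\<dots> \<le> 2 * M * (1 - \<alpha>) + (M * \<beta>) * (P V x + P V y)" using 1 2 by (simp add: algebra_simps)
      also have "\<dots> \<le> 2 * M * (1 - \<alpha>) + (M * \<beta>) * (gam * ?s + 2 * Kc)"
        using PVs Mb by (intro add_left_mono mult_left_mono) auto
      also have "\<dots> = M * (2 - \<alpha> + \<beta> * gam * ?s)" using bK by (simp add: algebra_simps)
      also have "\<dots> \<le> ab * M * (2 + \<beta> * ?s)"
        by (rule arith_A2) (use M bpos s0 in \<open>auto simp: ab_def ab2_def\<close>)
      finally show ?thesis unfolding Pd by (simp add: algebra_simps)
    qed
  qed
  show ?thesis
    by (rule exI[of _ ab], rule exI[of _ \<beta>]) (use ab_ge ab_lt bpos main in blast)
qed

lemma intk_meas: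
  assumes "f \<in> borel_measurable borel"
  shows "(\<lambda>x. \<integral>y. k x y * f y \<partial>lborel) \<in> borel_measurable lborel"
proof -
  have [measurable]: "f \<in> borel_measurable borel" by fact
  show ?thesis by (rule lborel.borel_measurable_lebesgue_integral) measurable
qed

lemma dens_meas'[measurable]: "dens \<in> borel_measurable lborel"
  using dens_meas by simp

lemma invariance:
  assumes fm: "f \<in> borel_measurable borel" and fb: "\<And>y. \<bar>f y\<bar> \<le> Bd"
  shows "(\<integral>x. dens x * P f x \<partial>lborel) = (\<integral>x. dens x * f x \<partial>lborel)"
proof -
  have [measurable]: "f \<in> borel_measurable borel" by (rule fm)
  have Bd0: "0 \<le> Bd" using fb[of undefined] by linarith
  have gf: "good f" by (rule good_bounded[OF fm fb])
  have ik: "(\<lambda>x. \<integral>y. k x y \<partial>lborel) \<in> borel_measurable lborel"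
    using intk_meas[of "\<lambda>_. 1"] by simp
  have ikf: "(\<lambda>x. \<integral>y. k x y * f y \<partial>lborel) \<in> borel_measurable lborel"
    by (rule intk_meas[OF fm])
  have absk: "\<bar>\<integral>y. k x y * g y \<partial>lborel\<bar> \<le> Bd" if "\<And>y. \<bar>g y\<bar> \<le> Bd" "good g" for g x
  proof -
    have "\<bar>\<integral>y. k x y * g y \<partial>lborel\<bar> \<le> (\<integral>y. Bd * k x y \<partial>lborel)"
    proof (rule integral_abs_bound_integral)
      show "integrable lborel (\<lambda>y. k x y * g y)" by (rule good_int[OF that(2)])
      show "integrable lborel (\<lambda>y. Bd * k x y)" using k_int by simp
      fix y show "\<bar>k x y * g y\<bar> \<le> Bd * k x y"
        using k_nn[of x y] that(1)[of y] by (simp add: abs_mult mult_right_mono mult.commute)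
    qed
    also have "\<dots> = Bd * (\<integral>y. k x y \<partial>lborel)" by simp
    also have "\<dots> \<le> Bd * 1" using k_le1[of x] Bd0 by (intro mult_left_mono) auto
    finally show ?thesis by simp
  qed
  define H1 where "H1 x y = dens x * k x y * f y" for x y
  define H3 where "H3 x y = dens x * k x y * f x" for x y
  have Hint: "integrable (lborel \<Otimes>\<^sub>M lborel) (case_prod H)"
    if Hdef: "H = H1 \<or> H = H3" for H
  proof -
    have Hm: "case_prod H \<in> borel_measurable (lborel \<Otimes>\<^sub>M lborel)"
      using Hdef unfolding H1_def[abs_def] H3_def[abs_def] by (auto simp: case_prod_beta')
    have Hb: "\<bar>H x y\<bar> \<le> Bd * (dens x * k x y)" for x y
    proof -
      have dk: "0 \<le> dens x * k x y" using dens_nn[of x] k_nn[of x y] by simp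
      have "\<bar>(dens x * k x y) * f z\<bar> \<le> Bd * (dens x * k x y)" for z
      proof -
        have "\<bar>(dens x * k x y) * f z\<bar> = (dens x * k x y) * \<bar>f z\<bar>"
          using dk by (simp only: abs_mult[of "dens x * k x y"] abs_of_nonneg)
        also have "\<dots> \<le> (dens x * k x y) * Bd" by (rule mult_left_mono[OF fb dk])
        finally show ?thesis by (simp add: mult.commute)
      qed
      then show ?thesis using Hdef unfolding H1_def H3_def by auto
    qed
    have ky: "integrable lborel (\<lambda>y. Bd * (dens x * k x y))" for x using k_int by simp
    show ?thesis
    proof (rule lborel_pair.Fubini_integrable)
      show "case_prod H \<in> borel_measurable (lborel \<Otimes>\<^sub>M lborel)" by (rule Hm)
      show "AE x in lborel. integrable lborel (\<lambda>y. case_prod H (x, y))"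
      proof (rule AE_I2)
        fix x
        show "integrable lborel (\<lambda>y. case_prod H (x, y))"
        proof (rule Bochner_Integration.integrable_bound[OF ky])
          show "(\<lambda>y. case_prod H (x, y)) \<in> borel_measurable lborel" using Hm by measurable
          show "AE y in lborel. norm (case_prod H (x, y)) \<le> norm (Bd * (dens x * k x y))"
            using Hb by (auto intro!: AE_I2 order_trans[OF _ abs_ge_self])
        qed
      qed
      show "integrable lborel (\<lambda>x. \<integral>y. norm (case_prod H (x, y)) \<partial>lborel)"
      proof (rule Bochner_Integration.integrable_bound)
        show "integrable lborel (\<lambda>x. Bd * dens x)" using dens_int by simp
        show "(\<lambda>x. \<integral>y. norm (case_prod H (x, y)) \<partial>lborel) \<in> borel_measurable lborel"
        proof (rule lborel.borel_measurable_lebesgue_integral)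
          have "(\<lambda>p. norm (case_prod H p)) \<in> borel_measurable (lborel \<Otimes>\<^sub>M lborel)" using Hm by measurable
          then show "(\<lambda>(x, y). norm (case_prod H (x, y))) \<in> borel_measurable (lborel \<Otimes>\<^sub>M lborel)"
            by (simp add: case_prod_unfold)
        qed
        show "AE x in lborel. norm (\<integral>y. norm (case_prod H (x, y)) \<partial>lborel) \<le> norm (Bd * dens x)"
        proof (rule AE_I2)
          fix x
          have "(\<integral>y. norm (case_prod H (x, y)) \<partial>lborel) \<le> (\<integral>y. Bd * (dens x * k x y) \<partial>lborel)"
            using Hb by (intro integral_mono' ky) (auto intro: order_trans[OF abs_ge_zero])
          also have "\<dots> = Bd * dens x * (\<integral>y. k x y \<partial>lborel)" by simp
          also have "\<dots> \<le> Bd * dens x * 1"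
            using k_le1[of x] Bd0 dens_nn[of x] by (intro mult_left_mono) auto
          finally have "(\<integral>y. norm (case_prod H (x, y)) \<partial>lborel) \<le> Bd * dens x" by simp
          moreover have "0 \<le> (\<integral>y. norm (case_prod H (x, y)) \<partial>lborel)" by simp
          ultimately show "norm (\<integral>y. norm (case_prod H (x, y)) \<partial>lborel) \<le> norm (Bd * dens x)"
            using Bd0 dens_nn[of x] by simp
        qed
      qed
    qed
  qed
  have T: "(\<integral>x. (\<integral>y. H1 x y \<partial>lborel) \<partial>lborel) = (\<integral>x. (\<integral>y. H3 x y \<partial>lborel) \<partial>lborel)"
  proof -
    have "(\<integral>x. (\<integral>y. H1 x y \<partial>lborel) \<partial>lborel) = (\<integral>y. (\<integral>x. H1 x y \<partial>lborel) \<partial>lborel)"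
      by (rule lborel_pair.Fubini_integral[symmetric]) (rule Hint, simp)
    also have "\<dots> = (\<integral>y. (\<integral>x. H3 y x \<partial>lborel) \<partial>lborel)"
      unfolding H1_def H3_def using balance by (simp add: mult_ac)
    finally show ?thesis .
  qed
  have e1: "dens x * (\<integral>y. k x y * f y \<partial>lborel) = (\<integral>y. H1 x y \<partial>lborel)" for x
    unfolding H1_def by (simp add: mult_ac)
  have e3: "dens x * (\<integral>y. k x y \<partial>lborel) * f x = (\<integral>y. H3 x y \<partial>lborel)" for x
    unfolding H3_def by (simp add: mult_ac)
  have bnd_int: "integrable lborel (\<lambda>x. dens x * g x)" if "g \<in> borel_measurable lborel" "\<And>x. \<bar>g x\<bar> \<le> Bd" for g
  proof (rule Bochner_Integration.integrable_bound)
    show "integrable lborel (\<lambda>x. Bd * dens x)" using dens_int by simp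
    show "(\<lambda>x. dens x * g x) \<in> borel_measurable lborel" using that(1) by measurable
    show "AE x in lborel. norm (dens x * g x) \<le> norm (Bd * dens x)"
    proof (rule AE_I2)
      fix x
      have "dens x * \<bar>g x\<bar> \<le> dens x * Bd" by (rule mult_left_mono[OF that(2) dens_nn])
      then show "norm (dens x * g x) \<le> norm (Bd * dens x)"
        using dens_nn[of x] Bd0 by (simp add: abs_mult mult.commute)
    qed
  qed
  have i1: "integrable lborel (\<lambda>x. dens x * (\<integral>y. k x y * f y \<partial>lborel))"
    by (rule bnd_int[OF ikf absk[OF fb gf]])
  have i2: "integrable lborel (\<lambda>x. dens x * f x)"
    by (rule bnd_int) (use fb in auto)
  have i3: "integrable lborel (\<lambda>x. dens x * ((\<integral>y. k x y \<partial>lborel) * f x))"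
  proof (rule bnd_int)
    show "(\<lambda>x. (\<integral>y. k x y \<partial>lborel) * f x) \<in> borel_measurable lborel" using ik by measurable
    fix x
    have "\<bar>(\<integral>y. k x y \<partial>lborel) * f x\<bar> \<le> 1 * Bd"
      unfolding abs_mult using k_le1[of x] fb[of x] k_nn
      by (intro mult_mono) (auto intro: Bochner_Integration.integral_nonneg)
    then show "\<bar>(\<integral>y. k x y \<partial>lborel) * f x\<bar> \<le> Bd" by simp
  qed
  have "(\<integral>x. dens x * P f x \<partial>lborel)
      = (\<integral>x. dens x * (\<integral>y. k x y * f y \<partial>lborel) + dens x * f x - dens x * ((\<integral>y. k x y \<partial>lborel) * f x) \<partial>lborel)"
    unfolding P_def by (simp add: algebra_simps)
  also have "\<dots> = (\<integral>x. dens x * (\<integral>y. k x y * f y \<partial>lborel) \<partial>lborel) + (\<integral>x. dens x * f x \<partial>lborel)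
       - (\<integral>x. dens x * ((\<integral>y. k x y \<partial>lborel) * f x) \<partial>lborel)"
    using i1 i2 i3 by simp
  also have "(\<integral>x. dens x * (\<integral>y. k x y * f y \<partial>lborel) \<partial>lborel) = (\<integral>x. dens x * ((\<integral>y. k x y \<partial>lborel) * f x) \<partial>lborel)"
    using T e1 e3 by (simp add: mult_ac)
  finally show ?thesis by simp
qed

lemma P_unit:
  assumes fm: "f \<in> borel_measurable borel" and f01: "\<And>y. 0 \<le> f y \<and> f y \<le> 1"
  shows "P f \<in> borel_measurable borel" "0 \<le> P f x" "P f x \<le> 1"
proof -
  have gf: "good f" by (rule good_bounded[OF fm, of 1]) (use f01 in auto)
  show "P f \<in> borel_measurable borel" by (rule P_meas[OF gf])
  have i: "integrable lborel (\<lambda>y. k x y * f y)" by (rule good_int[OF gf])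
  have a: "0 \<le> (\<integral>y. k x y * f y \<partial>lborel)"
    by (rule Bochner_Integration.integral_nonneg) (use k_nn f01 in simp)
  have b: "(\<integral>y. k x y * f y \<partial>lborel) \<le> (\<integral>y. k x y \<partial>lborel)"
  proof (rule integral_mono[OF i k_int])
    fix y show "k x y * f y \<le> k x y" using k_nn[of x y] f01[of y] by (simp add: mult_left_le)
  qed
  have r: "0 \<le> 1 - (\<integral>y. k x y \<partial>lborel)" by (rule r_nn)
  have c: "(1 - (\<integral>y. k x y \<partial>lborel)) * f x \<le> (1 - (\<integral>y. k x y \<partial>lborel)) * 1"
    using f01[of x] r by (intro mult_left_mono) auto
  have d: "0 \<le> (1 - (\<integral>y. k x y \<partial>lborel)) * f x" using f01[of x] r by simp
  show "0 \<le> P f x" unfolding P_def using a d by simp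
  show "P f x \<le> 1" unfolding P_def using b c by simp
qed

theorem geo_ergodic:
  "geometrically_ergodic (\<lambda>n x A. (P ^^ n) (indicator A) x) (density lborel (\<lambda>x. ennreal (dens x)))"
proof -
  obtain ab \<beta> where ab: "0 \<le> ab" "ab < 1" and bpos: "0 < \<beta>"
    and con: "\<And>\<phi> Bd M. \<phi> \<in> borel_measurable borel \<Longrightarrow> (\<forall>y. \<bar>\<phi> y\<bar> \<le> Bd) \<Longrightarrow> 0 \<le> M \<Longrightarrow>
        (\<forall>x y. \<bar>\<phi> x - \<phi> y\<bar> \<le> M * (2 + \<beta> * V x + \<beta> * V y)) \<Longrightarrow>
        (\<forall>x y. \<bar>P \<phi> x - P \<phi> y\<bar> \<le> ab * M * (2 + \<beta> * V x + \<beta> * V y))"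
    using contraction by blast
  let ?pi = "density lborel (\<lambda>x. ennreal (dens x))"
  define E where "E = (\<integral>x. dens x * V x \<partial>lborel)"
  define C where "C x = (1/2) * (2 + \<beta> * V x + \<beta> * E)" for x
  have Vnn: "0 \<le> V x" for x using V_ge[of x] by simp
  have bound: "\<bar>(P ^^ n) (indicator A) x - measure ?pi A\<bar> \<le> C x * ab ^ n"
    if A: "A \<in> sets ?pi" for A n x
  proof -
    have Ab[measurable]: "A \<in> sets borel" using A by simp
    define u where "u n = (P ^^ n) (indicator A)" for n
    have U: "u n \<in> borel_measurable borel \<and> (\<forall>y. 0 \<le> u n y \<and> u n y \<le> 1) \<and>
             (\<forall>x y. \<bar>u n x - u n y\<bar> \<le> ab ^ n * (1/2) * (2 + \<beta> * V x + \<beta> * V y))" for n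
    proof (induction n)
      case 0
      have "\<bar>indicator A x - indicator A y\<bar> \<le> (1/2::real) * (2 + \<beta> * V x + \<beta> * V y)" for x y
      proof -
        have "\<bar>indicator A x - indicator A y :: real\<bar> \<le> 1" by (simp add: indicator_def)
        moreover have "0 \<le> \<beta> * V x + \<beta> * V y" using bpos Vnn[of x] Vnn[of y] by simp
        ultimately show ?thesis by simp
      qed
      then show ?case unfolding u_def by (simp add: indicator_def)
    next
      case (Suc n)
      then have um: "u n \<in> borel_measurable borel" and u01: "\<And>y. 0 \<le> u n y \<and> u n y \<le> 1"
        and uo: "\<forall>x y. \<bar>u n x - u n y\<bar> \<le> ab ^ n * (1/2) * (2 + \<beta> * V x + \<beta> * V y)" by auto
      have us: "u (Suc n) = P (u n)" unfolding u_def by simp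
      have "\<forall>x y. \<bar>P (u n) x - P (u n) y\<bar> \<le> ab * (ab ^ n * (1/2)) * (2 + \<beta> * V x + \<beta> * V y)"
        by (rule con[OF um, of 1]) (use u01 uo ab in auto)
      then show ?case unfolding us using P_unit[OF um u01] by (simp add: mult_ac)
    qed
    have inv: "(\<integral>y. dens y * u n y \<partial>lborel) = (\<integral>y. dens y * indicator A y \<partial>lborel)" for n
    proof (induction n)
      case (Suc n)
      have "(\<integral>y. dens y * u (Suc n) y \<partial>lborel) = (\<integral>y. dens y * P (u n) y \<partial>lborel)"
        unfolding u_def by simp
      also have "\<dots> = (\<integral>y. dens y * u n y \<partial>lborel)"
        by (rule invariance[of _ 1]) (use U[of n] in auto)
      finally show ?case using Suc by simp
    qed (simp add: u_def)
    have mA: "measure ?pi A = (\<integral>y. dens y * indicator A y \<partial>lborel)"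
    proof -
      have "measure ?pi A = (\<integral>y. indicator A y \<partial>?pi)" by simp
      also have "\<dots> = (\<integral>y. dens y *\<^sub>R indicator A y \<partial>lborel)"
        by (rule integral_density) (auto simp: dens_nn)
      finally show ?thesis by simp
    qed
    have iu: "integrable lborel (\<lambda>y. dens y * u n y)"
    proof (rule Bochner_Integration.integrable_bound[OF dens_int])
      have [measurable]: "u n \<in> borel_measurable borel" using U[of n] by blast
      show "(\<lambda>y. dens y * u n y) \<in> borel_measurable lborel" by measurable
      show "AE y in lborel. norm (dens y * u n y) \<le> norm (dens y)"
        using U[of n] dens_nn by (auto intro!: AE_I2 simp: abs_mult mult_left_le)
    qed
    have ic: "integrable lborel (\<lambda>y. dens y * u n x)" using dens_int by simp
    have "u n x - measure ?pi A = (\<integral>y. dens y * u n x \<partial>lborel) - (\<integral>y. dens y * u n y \<partial>lborel)"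
      unfolding mA inv[of n, symmetric] using dens_one by simp
    also have "\<dots> = (\<integral>y. dens y * (u n x - u n y) \<partial>lborel)"
      using iu ic by (simp add: algebra_simps)
    finally have eq: "u n x - measure ?pi A = (\<integral>y. dens y * (u n x - u n y) \<partial>lborel)" .
    have ib: "integrable lborel (\<lambda>y. (ab ^ n * (1/2) * (2 + \<beta> * V x)) * dens y + (ab ^ n * (1/2) * \<beta>) * (dens y * V y))"
      using dens_int densV_int by simp
    have "\<bar>u n x - measure ?pi A\<bar> \<le> (\<integral>y. (ab ^ n * (1/2) * (2 + \<beta> * V x)) * dens y + (ab ^ n * (1/2) * \<beta>) * (dens y * V y) \<partial>lborel)"
      unfolding eq
    proof (rule integral_abs_bound_integral)
      show "integrable lborel (\<lambda>y. dens y * (u n x - u n y))" using iu ic by (simp add: right_diff_distrib)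
      show "integrable lborel (\<lambda>y. (ab ^ n * (1/2) * (2 + \<beta> * V x)) * dens y + (ab ^ n * (1/2) * \<beta>) * (dens y * V y))"
        by (rule ib)
      fix y
      have "\<bar>dens y * (u n x - u n y)\<bar> = dens y * \<bar>u n x - u n y\<bar>" using dens_nn[of y] by (simp add: abs_mult)
      also have "\<dots> \<le> dens y * (ab ^ n * (1/2) * (2 + \<beta> * V x + \<beta> * V y))"
        using U[of n] dens_nn[of y] by (intro mult_left_mono) auto
      also have "\<dots> = (ab ^ n * (1/2) * (2 + \<beta> * V x)) * dens y + (ab ^ n * (1/2) * \<beta>) * (dens y * V y)"
        by (simp add: algebra_simps)
      finally show "\<bar>dens y * (u n x - u n y)\<bar> \<le> (ab ^ n * (1/2) * (2 + \<beta> * V x)) * dens y + (ab ^ n * (1/2) * \<beta>) * (dens y * V y)" .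
    qed
    also have "\<dots> = (ab ^ n * (1/2) * (2 + \<beta> * V x)) * 1 + (ab ^ n * (1/2) * \<beta>) * E"
      using dens_int densV_int dens_one unfolding E_def by simp
    also have "\<dots> = C x * ab ^ n" unfolding C_def by (simp add: algebra_simps)
    finally show ?thesis unfolding u_def .
  qed
  show ?thesis
    unfolding geometrically_ergodic_def
  proof (intro exI[of _ ab] exI[of _ C] conjI ab AE_I2 allI)
    fix x n
    show "tv_dist ((\<lambda>n x A. (P ^^ n) (indicator A) x) n x) ?pi \<le> C x * ab ^ n"
      unfolding tv_dist_def
    proof (rule cSUP_least)
      show "sets ?pi \<noteq> {}" using sets.empty_sets by blast
      fix A assume "A \<in> sets ?pi"
      then show "\<bar>(P ^^ n) (indicator A) x - measure ?pi A\<bar> \<le> C x * ab ^ n" by (rule bound)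
    qed
  qed
qed

end

locale mala = proxset psi lam m for psi :: "'a::euclidean_space \<Rightarrow> ereal" and lam m +
  fixes h :: real
  assumes h_pos: "0 < h" and h_le: "h \<le> 2 * lam"
begin

definition cc :: "'a \<Rightarrow> 'a" where "cc x = x - (h / 2) *\<^sub>R grad_env lam psi x"

abbreviation q :: "'a \<Rightarrow> 'a \<Rightarrow> real" where "q \<equiv> mala_q lam psi h"

lemma q_eq: "q x y = gdens h (y - cc x)"
  unfolding mala_q_def gdens_def cc_def by simp

lemma q_pos: "0 < q x y" using gdens_pos[OF h_pos] by (simp add: q_eq)

lemma q_le: "q x y \<le> (2 * pi * h) powr (- real DIM('a) / 2)"
proof -
  have "exp (- (norm (y - (x - (h / 2) *\<^sub>R grad_env lam psi x)))\<^sup>2 / (2 * h)) \<le> 1"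
    using h_pos by simp
  then show ?thesis unfolding mala_q_def by (intro mult_left_le) auto
qed

lemma cc_eq: "cc x = (1 - h / (2 * lam)) *\<^sub>R x + (h / (2 * lam)) *\<^sub>R prox lam psi x"
  unfolding cc_def grad_env_def using lam_pos by (simp add: algebra_simps)

lemma cc_bound1: "norm (cc x) \<le> (1 - h / (2 * lam)) * norm x + (h / (2 * lam)) * norm (prox lam psi x)"
proof -
  have a: "0 \<le> 1 - h / (2 * lam)" and b: "0 \<le> h / (2 * lam)" using h_le h_pos lam_pos by auto
  have "norm (cc x) \<le> norm ((1 - h / (2 * lam)) *\<^sub>R x) + norm ((h / (2 * lam)) *\<^sub>R prox lam psi x)"
    unfolding cc_eq by (rule norm_triangle_ineq)
  also have "\<dots> = (1 - h / (2 * lam)) * norm x + (h / (2 * lam)) * norm (prox lam psi x)"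
    using a b h_pos lam_pos by simp
  finally show ?thesis .
qed

lemma cc_bound: "norm (cc x) \<le> 2 * norm x + norm (prox lam psi 0)"
proof -
  have a: "0 \<le> 1 - h / (2 * lam)" "1 - h / (2 * lam) \<le> 1" and b: "0 \<le> h / (2 * lam)" "h / (2 * lam) \<le> 1"
    using h_le h_pos lam_pos by auto
  have "(1 - h / (2 * lam)) * norm x \<le> norm x" by (rule mult_left_le_one_le) (use a in auto)
  moreover have "(h / (2 * lam)) * norm (prox lam psi x) \<le> norm (prox lam psi x)"
    by (rule mult_left_le_one_le) (use b in auto)
  ultimately show ?thesis using cc_bound1[of x] prox_bound[of x] by linarith
qed

lemma cc_cont: "continuous_on UNIV cc"
  unfolding cc_eq[abs_def] by (intro continuous_intros prox_cont)

lemma q_meas[measurable]: "q x \<in> borel_measurable borel"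
  unfolding q_eq[abs_def] by measurable

lemma q_shift:
  assumes [measurable]: "g \<in> borel_measurable borel"
  shows "integrable lborel (\<lambda>y. q x y * g y) \<longleftrightarrow> integrable lborel (\<lambda>z. gdens h z * g (cc x + z))"
    and "(\<integral>y. q x y * g y \<partial>lborel) = (\<integral>z. gdens h z * g (cc x + z) \<partial>lborel)"
  using lborel_shift_integral[of "\<lambda>y. q x y * g y" "cc x"] by (simp_all add: q_eq)

lemma q_int: "integrable lborel (q x)" and q_one: "(\<integral>y. q x y \<partial>lborel) = 1"
  using q_shift[of "\<lambda>_. 1" x] gdens_has_integral[OF h_pos, where 'a='a]
  by (simp_all add: has_bochner_integral_iff)

lemma q_mom_int: "integrable lborel (\<lambda>y. q x y * (norm (y - cc x))\<^sup>2)"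
  and q_mom: "(\<integral>y. q x y * (norm (y - cc x))\<^sup>2 \<partial>lborel) = real DIM('a) * h"
  using q_shift[of "\<lambda>y. (norm (y - cc x))\<^sup>2" x] gdens_moment2[OF h_pos, where 'a='a]
  by (simp_all add: has_bochner_integral_iff)

lemma norm_le_sq: "norm (y::'a) \<le> 1 + (norm y)\<^sup>2"
proof -
  have "(norm y - 1/2)\<^sup>2 = (norm y)\<^sup>2 - norm y + 1/4" by (simp add: power2_eq_square algebra_simps)
  moreover have "0 \<le> (norm y - 1/2)\<^sup>2" by simp
  ultimately show ?thesis by linarith
qed

lemma qV_int: "integrable lborel (\<lambda>y. q x y * (1 + norm y))"
  and qV_le: "(\<integral>y. q x y * (1 + norm y) \<partial>lborel) \<le> 2 + norm (cc x) + real DIM('a) * h"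
proof -
  have ib: "integrable lborel (\<lambda>y. (2 + norm (cc x)) * q x y + q x y * (norm (y - cc x))\<^sup>2)"
    using q_int q_mom_int by simp
  have pt: "q x y * (1 + norm y) \<le> (2 + norm (cc x)) * q x y + q x y * (norm (y - cc x))\<^sup>2" for y
  proof -
    have "norm y \<le> norm (cc x) + norm (y - cc x)" by (metis norm_triangle_sub add.commute)
    also have "norm (y - cc x) \<le> 1 + (norm (y - cc x))\<^sup>2" by (rule norm_le_sq)
    finally have "1 + norm y \<le> 2 + norm (cc x) + (norm (y - cc x))\<^sup>2" by simp
    then have "q x y * (1 + norm y) \<le> q x y * (2 + norm (cc x) + (norm (y - cc x))\<^sup>2)"
      using q_pos[of x y] by (intro mult_left_mono) auto
    then show ?thesis by (simp add: algebra_simps)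
  qed
  show i: "integrable lborel (\<lambda>y. q x y * (1 + norm y))"
  proof (rule Bochner_Integration.integrable_bound[OF ib])
    show "(\<lambda>y. q x y * (1 + norm y)) \<in> borel_measurable lborel" by measurable
    show "AE y in lborel. norm (q x y * (1 + norm y)) \<le> norm ((2 + norm (cc x)) * q x y + q x y * (norm (y - cc x))\<^sup>2)"
    proof (rule AE_I2)
      fix y
      have "0 \<le> q x y * (1 + norm y)" using q_pos[of x y] by simp
      then show "norm (q x y * (1 + norm y)) \<le> norm ((2 + norm (cc x)) * q x y + q x y * (norm (y - cc x))\<^sup>2)"
        using pt[of y] by simp
    qed
  qed
  have "(\<integral>y. q x y * (1 + norm y) \<partial>lborel) \<le> (\<integral>y. (2 + norm (cc x)) * q x y + q x y * (norm (y - cc x))\<^sup>2 \<partial>lborel)"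
    by (rule integral_mono[OF i ib pt])
  also have "\<dots> = 2 + norm (cc x) + real DIM('a) * h"
    using q_int q_mom_int q_one q_mom by simp
  finally show "(\<integral>y. q x y * (1 + norm y) \<partial>lborel) \<le> 2 + norm (cc x) + real DIM('a) * h" .
qed

end

context mala begin

lemma env_cont'[continuous_intros]: "continuous_on S f \<Longrightarrow> continuous_on S (\<lambda>x. moreau_env lam psi (f x))"
  by (rule continuous_on_compose2[OF env_cont]) auto

lemma cc_cont'[continuous_intros]: "continuous_on S f \<Longrightarrow> continuous_on S (\<lambda>x. cc (f x))"
  by (rule continuous_on_compose2[OF cc_cont]) auto

lemma gdens_cont'[continuous_intros]: "continuous_on S f \<Longrightarrow> continuous_on S (\<lambda>x. gdens h (f x))"
  unfolding gdens_def by (intro continuous_intros) (use h_pos in auto)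

definition Zc :: real where "Zc = (\<integral>x. exp (- moreau_env lam psi x) \<partial>lborel)"

lemma dens_eq: "target_dens lam psi x = exp (- moreau_env lam psi x) / Zc"
  unfolding target_dens_def Zc_def ..

lemma expenv_meas[measurable]: "(\<lambda>x. exp (- moreau_env lam psi x)) \<in> borel_measurable borel"
  by (intro borel_measurable_continuous_onI continuous_intros)

end

locale mala2 = mala psi lam m h for psi :: "'a::euclidean_space \<Rightarrow> ereal" and lam m h +
  fixes Rg lg :: real
  assumes lg: "0 \<le> lg" "lg < 1" and Rg: "0 \<le> Rg"
    and growth: "\<And>x. Rg \<le> norm x \<Longrightarrow> norm (prox lam psi x) \<le> lg * norm x"
begin

definition h2 :: real where "h2 = lam / (1 - lg)\<^sup>2"

lemma h2_pos: "0 < h2" unfolding h2_def using lam_pos lg by simp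

lemma env_tail: "- moreau_env lam psi x \<le> - m + Rg\<^sup>2 / (2 * h2) - (norm x)\<^sup>2 / (2 * h2)"
proof (cases "Rg \<le> norm x")
  case True
  have a: "(1 - lg) * norm x \<le> norm (prox lam psi x - x)"
    using growth[OF True] norm_triangle_ineq3[of x "prox lam psi x"] by (simp add: norm_minus_commute algebra_simps)
  have b: "0 \<le> (1 - lg) * norm x" using lg by simp
  have "((1 - lg) * norm x)\<^sup>2 \<le> (norm (prox lam psi x - x))\<^sup>2" by (rule power_mono[OF a b])
  then have "((1 - lg) * norm x)\<^sup>2 / (2 * lam) \<le> (norm (prox lam psi x - x))\<^sup>2 / (2 * lam)"
    using lam_pos by (intro divide_right_mono) auto
  moreover have "((1 - lg) * norm x)\<^sup>2 / (2 * lam) = (norm x)\<^sup>2 / (2 * h2)"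
  proof -
    have "((1 - lg) * norm x)\<^sup>2 = (1 - lg)\<^sup>2 * (norm x)\<^sup>2" by (rule power_mult_distrib)
    moreover have "(1 - lg)\<^sup>2 > 0" using lg by simp
    ultimately show ?thesis unfolding h2_def using lam_pos by (simp add: field_simps)
  qed
  moreover have "0 \<le> Rg\<^sup>2 / (2 * h2)" using h2_pos by simp
  ultimately show ?thesis using pv(2)[of x] env_eq[of x] by linarith
next
  case False
  have "(norm x)\<^sup>2 \<le> Rg\<^sup>2" using False norm_ge_zero[of x] by (intro power_mono) auto
  then have "(norm x)\<^sup>2 / (2 * h2) \<le> Rg\<^sup>2 / (2 * h2)" using h2_pos by (intro divide_right_mono) auto
  then show ?thesis using env_ge[of x] by linarith
qed

definition K1 :: real where "K1 = exp (- m + Rg\<^sup>2 / (2 * h2)) / ((2 * pi * h2) powr (- real DIM('a) / 2))"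

lemma K1_pos: "0 < K1" unfolding K1_def using h2_pos by simp

lemma expenv_le: "exp (- moreau_env lam psi x) \<le> K1 * gdens h2 x"
proof -
  have "exp (- moreau_env lam psi x) \<le> exp (- m + Rg\<^sup>2 / (2 * h2) - (norm x)\<^sup>2 / (2 * h2))"
    using env_tail[of x] by simp
  also have "\<dots> = exp (- m + Rg\<^sup>2 / (2 * h2)) * exp (- (norm x)\<^sup>2 / (2 * h2))"
    by (simp add: exp_diff exp_minus exp_add field_simps)
  also have "\<dots> = K1 * gdens h2 x"
    unfolding K1_def gdens_def using h2_pos by simp
  finally show ?thesis .
qed

lemma g2_int: "integrable lborel (gdens h2 :: 'a \<Rightarrow> real)"
  using gdens_has_integral[OF h2_pos] by (rule integrable.intros)

lemma g2m_int: "integrable lborel (\<lambda>x::'a. gdens h2 x * (norm x)\<^sup>2)"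
  using gdens_moment2[OF h2_pos] by (rule integrable.intros)

lemma expenv_int: "integrable lborel (\<lambda>x. exp (- moreau_env lam psi x))"
proof (rule Bochner_Integration.integrable_bound)
  show "integrable lborel (\<lambda>x::'a. K1 * gdens h2 x)"
    using g2_int by simp
  show "(\<lambda>x. exp (- moreau_env lam psi x)) \<in> borel_measurable lborel" by simp
  show "AE x in lborel. norm (exp (- moreau_env lam psi x)) \<le> norm (K1 * gdens h2 x)"
  proof (rule AE_I2)
    fix x :: 'a
    have "0 < K1 * gdens h2 x" using K1_pos gdens_pos[OF h2_pos, of x] by simp
    then show "norm (exp (- moreau_env lam psi x)) \<le> norm (K1 * gdens h2 x)"
      using expenv_le[of x] by simp
  qed
qed

lemma expenvV_int: "integrable lborel (\<lambda>x. exp (- moreau_env lam psi x) * (1 + norm x))"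
proof (rule Bochner_Integration.integrable_bound)
  show "integrable lborel (\<lambda>x::'a. (2 * K1) * gdens h2 x + K1 * (gdens h2 x * (norm x)\<^sup>2))"
    using g2_int g2m_int by simp
  show "(\<lambda>x. exp (- moreau_env lam psi x) * (1 + norm x)) \<in> borel_measurable lborel" by simp
  show "AE x in lborel. norm (exp (- moreau_env lam psi x) * (1 + norm x))
      \<le> norm ((2 * K1) * gdens h2 x + K1 * (gdens h2 x * (norm x)\<^sup>2))"
  proof (rule AE_I2)
    fix x :: 'a
    have g: "0 < gdens h2 x" by (rule gdens_pos[OF h2_pos])
    have "exp (- moreau_env lam psi x) * (1 + norm x) \<le> (K1 * gdens h2 x) * (2 + (norm x)\<^sup>2)"
      using expenv_le[of x] norm_le_sq[of x] g K1_pos by (intro mult_mono) auto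
    also have "\<dots> = (2 * K1) * gdens h2 x + K1 * (gdens h2 x * (norm x)\<^sup>2)" by (simp add: algebra_simps)
    finally show "norm (exp (- moreau_env lam psi x) * (1 + norm x))
      \<le> norm ((2 * K1) * gdens h2 x + K1 * (gdens h2 x * (norm x)\<^sup>2))"
      using g K1_pos by simp
  qed
qed

lemma Zc_pos: "0 < Zc"
proof -
  have nn: "0 \<le> Zc" unfolding Zc_def by (rule Bochner_Integration.integral_nonneg) simp
  have "Zc \<noteq> 0"
  proof
    assume "Zc = 0"
    then have "AE x in lborel. exp (- moreau_env lam psi x) = 0"
      using integral_nonneg_eq_0_iff_AE[OF expenv_int] unfolding Zc_def by simp
    then have "AE (x::'a) in lborel. False" by simp
    then have "ae_filter (lborel::'a measure) = bot" by (simp add: eventually_False)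
    then show False by (simp add: ae_filter_eq_bot_iff)
  qed
  with nn show ?thesis by simp
qed

lemma dens_pos: "0 < target_dens lam psi x"
  using Zc_pos by (simp add: dens_eq)

lemma dens_le: "target_dens lam psi x \<le> exp (- m) / Zc"
  using Zc_pos env_ge[of x] by (simp add: dens_eq divide_right_mono)

lemma dens_cont'[continuous_intros]: "continuous_on S f \<Longrightarrow> continuous_on S (\<lambda>x. target_dens lam psi (f x))"
  unfolding dens_eq by (intro continuous_intros) (use Zc_pos in auto)

lemma dens_meas[measurable]: "target_dens lam psi \<in> borel_measurable borel"
  by (intro borel_measurable_continuous_onI continuous_intros continuous_on_id)

lemma dens_int: "integrable lborel (target_dens lam psi)"
  unfolding dens_eq[abs_def] using expenv_int by simp

lemma dens_one: "(\<integral>x. target_dens lam psi x \<partial>lborel) = 1"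
  unfolding dens_eq[abs_def] using Zc_pos by (simp add: Zc_def[symmetric])

lemma densV_int: "integrable lborel (\<lambda>x. target_dens lam psi x * (1 + norm x))"
proof -
  have "integrable lborel (\<lambda>x. (exp (- moreau_env lam psi x) * (1 + norm x)) / Zc)"
    using expenvV_int by simp
  then show ?thesis by (simp add: dens_eq)
qed

end

context mala2 begin

abbreviation dens :: "'a \<Rightarrow> real" where "dens \<equiv> target_dens lam psi"
abbreviation acc :: "'a \<Rightarrow> 'a \<Rightarrow> real" where "acc \<equiv> mala_acc lam psi h"

lemma acc_eq: "acc x y = min 1 ((dens y * q y x) / (dens x * q x y))"
  unfolding mala_acc_def ..

lemma dq_pos: "0 < dens x * q x y" using dens_pos q_pos by simp

lemma acc_nn: "0 \<le> acc x y"
  unfolding acc_eq using dq_pos[of x y] dq_pos[of y x] by simp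

lemma acc_le1: "acc x y \<le> 1" unfolding acc_eq by simp

lemma acc_one: "dens x * q x y \<le> dens y * q y x \<Longrightarrow> acc x y = 1"
  unfolding acc_eq using dq_pos[of x y] by simp

lemma min_aux: "0 < (a::real) \<Longrightarrow> a * min 1 (b / a) = min a b"
  by (cases "1 \<le> b / a") (auto simp: min_def field_simps)

lemma balance: "dens x * (q x y * acc x y) = dens y * (q y x * acc y x)"
proof -
  have "dens x * (q x y * acc x y) = (dens x * q x y) * min 1 ((dens y * q y x) / (dens x * q x y))"
    unfolding acc_eq by (simp add: mult_ac)
  also have "\<dots> = min (dens x * q x y) (dens y * q y x)" by (rule min_aux[OF dq_pos])
  also have "\<dots> = min (dens y * q y x) (dens x * q x y)" by (rule min.commute)
  also have "\<dots> = (dens y * q y x) * min 1 ((dens x * q x y) / (dens y * q y x))"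
    by (rule min_aux[OF dq_pos, symmetric])
  also have "\<dots> = dens y * (q y x * acc y x)"
    unfolding acc_eq by (simp add: mult_ac)
  finally show ?thesis .
qed

lemma kk_cont: "continuous_on UNIV (\<lambda>p. q (fst p) (snd p) * acc (fst p) (snd p))"
  unfolding mala_acc_def q_eq
  using dens_pos[THEN less_imp_neq, THEN not_sym] gdens_pos[OF h_pos, THEN less_imp_neq, THEN not_sym]
  by (intro continuous_intros) auto

lemma sets_pair_borel: "sets (lborel \<Otimes>\<^sub>M lborel) = sets (borel :: ('a \<times> 'a) measure)"
proof -
  have "sets (lborel \<Otimes>\<^sub>M lborel) = sets (borel \<Otimes>\<^sub>M (borel :: 'a measure))"
    by (intro sets_pair_measure_cong) auto
  also have "\<dots> = sets (borel :: ('a \<times> 'a) measure)" by (simp only: borel_prod)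
  finally show ?thesis .
qed

lemma kk_meas: "case_prod (\<lambda>x y. q x y * acc x y) \<in> borel_measurable (lborel \<Otimes>\<^sub>M lborel)"
proof -
  have "(\<lambda>p. q (fst p) (snd p) * acc (fst p) (snd p)) \<in> borel_measurable (borel :: ('a \<times> 'a) measure)"
    by (rule borel_measurable_continuous_onI[OF kk_cont])
  then have "(\<lambda>p. q (fst p) (snd p) * acc (fst p) (snd p)) \<in> borel_measurable (lborel \<Otimes>\<^sub>M lborel)"
    using measurable_cong_sets[OF sets_pair_borel refl, where N="borel :: real measure"] by simp
  then show ?thesis by (simp add: case_prod_unfold)
qed

lemma kk1_meas[measurable]: "(\<lambda>y. q x y * acc x y) \<in> borel_measurable borel"
proof -
  have "continuous_on UNIV (\<lambda>y. q x y * acc x y)"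
  proof -
    have "continuous_on UNIV (\<lambda>y::'a. (x, y))" by (intro continuous_intros)
    from continuous_on_compose2[OF kk_cont this] show ?thesis by simp
  qed
  then show ?thesis by (rule borel_measurable_continuous_onI)
qed

lemma q2_meas[measurable]: "(\<lambda>y. q y x) \<in> borel_measurable borel"
  unfolding q_eq by (intro borel_measurable_continuous_onI continuous_intros continuous_on_id)

lemma kk_le_q: "q x y * acc x y \<le> q x y"
  using q_pos[of x y] acc_le1[of x y] by (simp add: mult_left_le)

lemma kk_nn: "0 \<le> q x y * acc x y"
  using q_pos[of x y] acc_nn[of x y] by simp

lemma kk_int: "integrable lborel (\<lambda>y. q x y * acc x y)"
proof (rule Bochner_Integration.integrable_bound[OF q_int[of x]])
  show "(\<lambda>y. q x y * acc x y) \<in> borel_measurable lborel" by simp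
  show "AE y in lborel. norm (q x y * acc x y) \<le> norm (q x y)"
  proof (rule AE_I2)
    fix y show "norm (q x y * acc x y) \<le> norm (q x y)"
      using kk_le_q[of x y] kk_nn[of x y] q_pos[of x y] by simp
  qed
qed

lemma kk_le1: "(\<integral>y. q x y * acc x y \<partial>lborel) \<le> 1"
proof -
  have "(\<integral>y. q x y * acc x y \<partial>lborel) \<le> (\<integral>y. q x y \<partial>lborel)"
    by (rule integral_mono[OF kk_int q_int]) (rule kk_le_q)
  then show ?thesis using q_one by simp
qed

lemma kkV_int: "integrable lborel (\<lambda>y. q x y * acc x y * (1 + norm y))"
proof (rule Bochner_Integration.integrable_bound[OF qV_int[of x]])
  show "(\<lambda>y. q x y * acc x y * (1 + norm y)) \<in> borel_measurable lborel" by simp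
  show "AE y in lborel. norm (q x y * acc x y * (1 + norm y)) \<le> norm (q x y * (1 + norm y))"
  proof (rule AE_I2)
    fix y
    have "q x y * acc x y * (1 + norm y) \<le> q x y * (1 + norm y)"
      using kk_le_q[of x y] by (intro mult_right_mono) auto
    then show "norm (q x y * acc x y * (1 + norm y)) \<le> norm (q x y * (1 + norm y))"
      using kk_nn[of x y] q_pos[of x y] by simp
  qed
qed

lemma kkV_le: "(\<integral>y. q x y * acc x y * (1 + norm y) \<partial>lborel) \<le> 2 + norm (cc x) + real DIM('a) * h"
proof -
  have "(\<integral>y. q x y * acc x y * (1 + norm y) \<partial>lborel) \<le> (\<integral>y. q x y * (1 + norm y) \<partial>lborel)"
  proof (rule integral_mono[OF kkV_int qV_int])
    fix y show "q x y * acc x y * (1 + norm y) \<le> q x y * (1 + norm y)"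
      using kk_le_q[of x y] by (intro mult_right_mono) auto
  qed
  then show ?thesis using qV_le[of x] by linarith
qed

end

locale mala3 = mala2 psi lam m h Rg lg for psi :: "'a::euclidean_space \<Rightarrow> ereal" and lam m h Rg lg +
  assumes inwards: "((\<lambda>x. \<integral> y. indicator
            (sym_diff {y. target_dens lam psi y * mala_q lam psi h y x
                          \<ge> target_dens lam psi x * mala_q lam psi h x y}
                      {y. norm y \<le> norm x}) y
            * mala_q lam psi h x y \<partial>lborel) \<longlongrightarrow> 0) at_infinity"
begin

definition Aset :: "'a \<Rightarrow> 'a set" where "Aset x = {y. dens y * q y x \<ge> dens x * q x y}"
definition Iset :: "'a \<Rightarrow> 'a set" where "Iset x = {y. norm y \<le> norm x}"
definition Oset :: "'a \<Rightarrow> 'a set" where "Oset x = {y. norm x < norm y}"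

lemma Aset_meas[measurable]: "Aset x \<in> sets borel"
  unfolding Aset_def by measurable

lemma Iset_meas[measurable]: "Iset x \<in> sets borel"
  unfolding Iset_def by measurable

lemma Oset_meas[measurable]: "Oset x \<in> sets borel"
  unfolding Oset_def by measurable

lemma ind_q_int:
  assumes [measurable]: "S \<in> sets borel"
  shows "integrable lborel (\<lambda>y. indicator S y * q x y)"
proof (rule Bochner_Integration.integrable_bound[OF q_int[of x]])
  show "(\<lambda>y. indicator S y * q x y) \<in> borel_measurable lborel" by simp
  show "AE y in lborel. norm (indicator S y * q x y) \<le> norm (q x y)"
  proof (rule AE_I2)
    fix y show "norm (indicator S y * q x y) \<le> norm (q x y)"
      using q_pos[of x y] by (simp add: indicator_def)
  qed
qed

lemma rej_le: "1 - (\<integral>y. q x y * acc x y \<partial>lborel)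
   \<le> (\<integral>y. indicator (sym_diff (Aset x) (Iset x)) y * q x y \<partial>lborel)
     + (\<integral>y. indicator (Oset x) y * q x y \<partial>lborel)"
proof -
  have i1: "integrable lborel (\<lambda>y. indicator (sym_diff (Aset x) (Iset x)) y * q x y)"
    by (rule ind_q_int) measurable
  have i2: "integrable lborel (\<lambda>y. indicator (Oset x) y * q x y)"
    by (rule ind_q_int) measurable
  have "1 - (\<integral>y. q x y * acc x y \<partial>lborel) = (\<integral>y. q x y - q x y * acc x y \<partial>lborel)"
    using q_int kk_int q_one by simp
  also have "\<dots> \<le> (\<integral>y. indicator (sym_diff (Aset x) (Iset x)) y * q x y + indicator (Oset x) y * q x y \<partial>lborel)"
  proof (rule integral_mono)
    show "integrable lborel (\<lambda>y. q x y - q x y * acc x y)" using q_int kk_int by simp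
    show "integrable lborel (\<lambda>y. indicator (sym_diff (Aset x) (Iset x)) y * q x y + indicator (Oset x) y * q x y)"
      using i1 i2 by simp
    fix y
    have qp: "0 < q x y" by (rule q_pos)
    show "q x y - q x y * acc x y \<le> indicator (sym_diff (Aset x) (Iset x)) y * q x y + indicator (Oset x) y * q x y"
    proof (cases "y \<in> Aset x")
      case True
      then have "acc x y = 1" unfolding Aset_def by (intro acc_one) simp
      then show ?thesis using qp by (simp add: indicator_def)
    next
      case False
      have "q x y - q x y * acc x y \<le> q x y" using kk_nn[of x y] by simp
      moreover have "y \<in> sym_diff (Aset x) (Iset x) \<or> y \<in> Oset x"
        using False unfolding Iset_def Oset_def by auto
      ultimately show ?thesis using qp by (auto simp: indicator_def)
    qed
  qed
  also have "\<dots> = (\<integral>y. indicator (sym_diff (Aset x) (Iset x)) y * q x y \<partial>lborel)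
     + (\<integral>y. indicator (Oset x) y * q x y \<partial>lborel)"
    using i1 i2 by simp
  finally show ?thesis .
qed

lemma tail_le:
  assumes D: "0 < norm x - norm (cc x)"
  shows "(\<integral>y. indicator (Oset x) y * q x y \<partial>lborel) \<le> real DIM('a) * h / (norm x - norm (cc x))\<^sup>2"
proof -
  let ?D = "norm x - norm (cc x)"
  have "(\<integral>y. indicator (Oset x) y * q x y \<partial>lborel) \<le> (\<integral>y. q x y * (norm (y - cc x))\<^sup>2 / ?D\<^sup>2 \<partial>lborel)"
  proof (rule integral_mono)
    show "integrable lborel (\<lambda>y. indicator (Oset x) y * q x y)" by (rule ind_q_int) measurable
    show "integrable lborel (\<lambda>y. q x y * (norm (y - cc x))\<^sup>2 / ?D\<^sup>2)" using q_mom_int by simp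
    fix y
    show "indicator (Oset x) y * q x y \<le> q x y * (norm (y - cc x))\<^sup>2 / ?D\<^sup>2"
    proof (cases "y \<in> Oset x")
      case True
      then have "norm x < norm y" unfolding Oset_def by simp
      moreover have "norm y - norm (cc x) \<le> norm (y - cc x)" by (rule norm_triangle_ineq2)
      ultimately have "?D \<le> norm (y - cc x)" by linarith
      then have "?D\<^sup>2 \<le> (norm (y - cc x))\<^sup>2" using D by (intro power_mono) auto
      then have "1 \<le> (norm (y - cc x))\<^sup>2 / ?D\<^sup>2" using D by simp
      then have "q x y * 1 \<le> q x y * ((norm (y - cc x))\<^sup>2 / ?D\<^sup>2)"
        using q_pos[of x y] by (intro mult_left_mono) auto
      then show ?thesis using True by simp
    next
      case False
      then show ?thesis using q_pos[of x y] by simp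
    qed
  qed
  also have "\<dots> = real DIM('a) * h / ?D\<^sup>2"
    using q_mom_int q_mom by simp
  finally show ?thesis .
qed

lemma kk_int_nn: "0 \<le> (\<integral>y. q x y * acc x y \<partial>lborel)"
  by (rule Bochner_Integration.integral_nonneg) (rule kk_nn)

lemma drift_ex: "\<exists>gam Kc. 0 \<le> gam \<and> gam < 1 \<and> 0 < Kc \<and>
  (\<forall>x. (\<integral>y. q x y * acc x y * (1 + norm y) \<partial>lborel) + (1 - (\<integral>y. q x y * acc x y \<partial>lborel)) * (1 + norm x)
       \<le> gam * (1 + norm x) + Kc)"
proof -
  define \<theta> where "\<theta> = h / (2 * lam)"
  have th: "0 < \<theta>" "\<theta> \<le> 1" unfolding \<theta>_def using h_pos h_le lam_pos by auto
  define \<kappa> where "\<kappa> = 1 - \<theta> * (1 - lg)"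
  have ka: "0 \<le> \<kappa>" "\<kappa> < 1"
  proof -
    have "\<theta> * (1 - lg) \<le> 1 * 1" using th lg by (intro mult_mono) auto
    then show "0 \<le> \<kappa>" unfolding \<kappa>_def by simp
    show "\<kappa> < 1" unfolding \<kappa>_def using th lg by simp
  qed
  have ccg: "norm (cc x) \<le> \<kappa> * norm x" if "Rg \<le> norm x" for x
  proof -
    have "\<theta> * norm (prox lam psi x) \<le> \<theta> * (lg * norm x)"
      using growth[OF that] th by (intro mult_left_mono) auto
    then show ?thesis using cc_bound1[of x] unfolding \<theta>_def[symmetric] \<kappa>_def
      by (simp add: algebra_simps)
  qed
  define \<epsilon> where "\<epsilon> = (1 - \<kappa>) / 4"
  have ep: "0 < \<epsilon>" unfolding \<epsilon>_def using ka by simp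
  have "eventually (\<lambda>x. (\<integral>y. indicator (sym_diff (Aset x) (Iset x)) y * q x y \<partial>lborel) < \<epsilon> / 2) at_infinity"
    using order_tendstoD(2)[OF inwards, of "\<epsilon> / 2"] ep unfolding Aset_def Iset_def by simp
  then obtain b1 where b1: "\<And>x. b1 \<le> norm x \<Longrightarrow> (\<integral>y. indicator (sym_diff (Aset x) (Iset x)) y * q x y \<partial>lborel) < \<epsilon> / 2"
    unfolding eventually_at_infinity by blast
  define dh where "dh = real DIM('a) * h"
  have dh: "0 < dh" unfolding dh_def using h_pos by simp
  define T where "T = 2 * dh / (\<epsilon> * (1 - \<kappa>)\<^sup>2)"
  have T: "0 < T" unfolding T_def using dh ep ka by simp
  define R3 where "R3 = max (max Rg b1) (T + 1)"
  define p0 where "p0 = norm (prox lam psi 0)"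
  define gam where "gam = \<kappa> + \<epsilon>"
  define Kc where "Kc = 3 + 3 * R3 + p0 + dh"
  have R3: "1 \<le> R3" unfolding R3_def using T by simp
  have Kc: "0 < Kc" unfolding Kc_def p0_def using R3 dh norm_ge_zero[of "prox lam psi 0"] by linarith
  have gam: "0 \<le> gam" "gam < 1" unfolding gam_def \<epsilon>_def using ka by (auto simp: field_simps)
  let ?r = "\<lambda>x. 1 - (\<integral>y. q x y * acc x y \<partial>lborel)"
  have main: "(\<integral>y. q x y * acc x y * (1 + norm y) \<partial>lborel) + ?r x * (1 + norm x) \<le> gam * (1 + norm x) + Kc" for x
  proof (cases "R3 \<le> norm x")
    case True
    have xg: "Rg \<le> norm x" "b1 \<le> norm x" "T + 1 \<le> norm x" using True unfolding R3_def by auto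
    have x1: "1 \<le> norm x" using xg T by linarith
    have cx: "norm (cc x) \<le> \<kappa> * norm x" by (rule ccg[OF xg(1)])
    have "(1 - \<kappa>) * norm x = norm x - \<kappa> * norm x" by (simp add: algebra_simps)
    then have Dlow: "(1 - \<kappa>) * norm x \<le> norm x - norm (cc x)" using cx by linarith
    have Dpos0: "0 < (1 - \<kappa>) * norm x" using ka x1 by (intro mult_pos_pos) auto
    have D: "0 < norm x - norm (cc x)" using Dlow Dpos0 by linarith
    have "((1 - \<kappa>) * norm x)\<^sup>2 \<le> (norm x - norm (cc x))\<^sup>2"
      using Dlow Dpos0 by (intro power_mono) auto
    moreover have "0 < (norm x - norm (cc x))\<^sup>2 * ((1 - \<kappa>) * norm x)\<^sup>2"
      using D Dpos0 by (intro mult_pos_pos) auto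
    ultimately have t1: "dh / (norm x - norm (cc x))\<^sup>2 \<le> dh / ((1 - \<kappa>) * norm x)\<^sup>2"
      using dh by (intro divide_left_mono) auto
    have "T \<le> norm x" using xg by linarith
    also have "norm x \<le> (norm x)\<^sup>2"
    proof -
      have "norm x * 1 \<le> norm x * norm x" using x1 by (intro mult_left_mono) auto
      then show ?thesis by (simp add: power2_eq_square)
    qed
    finally have "(1 - \<kappa>)\<^sup>2 * T \<le> (1 - \<kappa>)\<^sup>2 * (norm x)\<^sup>2" by (intro mult_left_mono) auto
    moreover have "(1 - \<kappa>)\<^sup>2 * T = 2 * dh / \<epsilon>"
    proof -
      have "(1 - \<kappa>)\<^sup>2 \<noteq> 0" using ka by simp
      then show ?thesis unfolding T_def using ep by (simp add: field_simps)
    qed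
    ultimately have t2: "2 * dh / \<epsilon> \<le> ((1 - \<kappa>) * norm x)\<^sup>2" by (simp add: power_mult_distrib)
    have "0 < ((1 - \<kappa>) * norm x)\<^sup>2 * (2 * dh / \<epsilon>)"
      using Dpos0 dh ep by (intro mult_pos_pos) auto
    then have t3: "dh / ((1 - \<kappa>) * norm x)\<^sup>2 \<le> dh / (2 * dh / \<epsilon>)"
      using t2 dh by (intro divide_left_mono) auto
    have t4: "dh / (2 * dh / \<epsilon>) = \<epsilon> / 2" using dh ep by (simp add: field_simps)
    have tail: "(\<integral>y. indicator (Oset x) y * q x y \<partial>lborel) \<le> \<epsilon> / 2"
      using tail_le[OF D, folded dh_def] t1 t3 t4 by linarith
    have rx: "?r x \<le> \<epsilon>" using rej_le[of x] tail b1[OF xg(2)] by linarith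
    have r0: "0 \<le> ?r x" using kk_le1[of x] by simp
    have "(\<integral>y. q x y * acc x y * (1 + norm y) \<partial>lborel) + ?r x * (1 + norm x)
        \<le> (2 + norm (cc x) + dh) + \<epsilon> * (1 + norm x)"
      using kkV_le[of x, folded dh_def] rx x1 by (intro add_mono mult_right_mono) auto
    also have "\<dots> \<le> (2 + \<kappa> * (1 + norm x) + dh) + \<epsilon> * (1 + norm x)"
      using cx ka by (simp add: algebra_simps)
    also have "\<dots> = gam * (1 + norm x) + (2 + dh)" unfolding gam_def by (simp add: algebra_simps)
    also have "\<dots> \<le> gam * (1 + norm x) + Kc" unfolding Kc_def p0_def using R3 by simp
    finally show ?thesis .
  next
    case False
    have r1: "?r x \<le> 1" using kk_int_nn[of x] by simp
    have cx: "norm (cc x) \<le> 2 * R3 + p0" using cc_bound[of x] False unfolding p0_def by linarith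
    have "(\<integral>y. q x y * acc x y * (1 + norm y) \<partial>lborel) + ?r x * (1 + norm x)
        \<le> (2 + norm (cc x) + dh) + 1 * (1 + norm x)"
      using kkV_le[of x, folded dh_def] r1 by (intro add_mono mult_right_mono) auto
    also have "\<dots> \<le> Kc" unfolding Kc_def using cx False by simp
    also have "\<dots> \<le> gam * (1 + norm x) + Kc" using gam by simp
    finally show ?thesis .
  qed
  show ?thesis using gam Kc main by blast
qed

lemma q_lower:
  assumes "norm (y - cc x) \<le> E"
  shows "(2 * pi * h) powr (- real DIM('a) / 2) * exp (- E\<^sup>2 / (2 * h)) \<le> q x y"
proof -
  have "(norm (y - cc x))\<^sup>2 \<le> E\<^sup>2" using assms by (intro power_mono) auto
  then have "- E\<^sup>2 / (2 * h) \<le> - (norm (y - cc x))\<^sup>2 / (2 * h)"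
    using h_pos by (simp add: divide_right_mono)
  then have "exp (- E\<^sup>2 / (2 * h)) \<le> exp (- (norm (y - cc x))\<^sup>2 / (2 * h))" by simp
  then show ?thesis unfolding q_eq gdens_def by (intro mult_left_mono) auto
qed

lemma minor_ex: "\<exists>\<delta> B. 0 < \<delta> \<and> B \<in> sets lborel \<and> 0 < measure lborel B \<and> emeasure lborel B < \<infinity>
   \<and> (\<forall>x. 1 + norm x \<le> R \<longrightarrow> (\<forall>y\<in>B. \<delta> \<le> q x y * acc x y))"
proof -
  define B :: "'a set" where "B = cball 0 1"
  define R' where "R' = max R 0"
  define p0 where "p0 = norm (prox lam psi 0)"
  define A where "A = (2 * pi * h) powr (- real DIM('a) / 2)"
  have Apos: "0 < A" unfolding A_def using h_pos by simp
  obtain y0 where y0: "psi y0 < \<infinity>" using proper by (auto simp: proper_fun_def)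
  then obtain b0 where b0: "psi y0 = ereal b0" using psi_finite by fastforce
  define E1 where "E1 = 1 + 2 * R' + p0"
  define E2 where "E2 = R' + 2 + p0"
  define E3 where "E3 = b0 + (norm y0 + 1)\<^sup>2 / (2 * lam)"
  define \<delta>1 where "\<delta>1 = A * exp (- E1\<^sup>2 / (2 * h))"
  define N0 where "N0 = (exp (- E3) / Zc) * (A * exp (- E2\<^sup>2 / (2 * h)))"
  define D0 where "D0 = (exp (- m) / Zc) * A"
  define a0 where "a0 = min 1 (N0 / D0)"
  have N0: "0 < N0" unfolding N0_def using Zc_pos Apos by simp
  have D0: "0 < D0" unfolding D0_def using Zc_pos Apos by simp
  have a0: "0 < a0" unfolding a0_def using N0 D0 by simp
  have d1: "0 < \<delta>1" unfolding \<delta>1_def using Apos by simp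
  have key: "\<delta>1 * a0 \<le> q x y * acc x y" if x: "1 + norm x \<le> R" and y: "y \<in> B" for x y
  proof -
    have xR: "norm x \<le> R'" using x unfolding R'_def by simp
    have y1: "norm y \<le> 1" using y unfolding B_def by simp
    have "norm (y - cc x) \<le> norm y + norm (cc x)" by (rule norm_triangle_ineq4)
    also have "\<dots> \<le> E1" using y1 cc_bound[of x] xR unfolding E1_def p0_def by linarith
    finally have q1: "\<delta>1 \<le> q x y" unfolding \<delta>1_def A_def by (rule q_lower)
    have "norm (x - cc y) \<le> norm x + norm (cc y)" by (rule norm_triangle_ineq4)
    also have "\<dots> \<le> E2" using y1 cc_bound[of y] xR unfolding E2_def p0_def by linarith
    finally have q2: "A * exp (- E2\<^sup>2 / (2 * h)) \<le> q y x" unfolding A_def by (rule q_lower)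
    have "moreau_env lam psi y \<le> b0 + (norm (y0 - y))\<^sup>2 / (2 * lam)" by (rule env_le[OF b0])
    also have "(norm (y0 - y))\<^sup>2 \<le> (norm y0 + 1)\<^sup>2"
    proof -
      have "norm (y0 - y) \<le> norm y0 + norm y" by (rule norm_triangle_ineq4)
      then have "norm (y0 - y) \<le> norm y0 + 1" using y1 by linarith
      then show ?thesis by (intro power_mono) auto
    qed
    then have "b0 + (norm (y0 - y))\<^sup>2 / (2 * lam) \<le> E3" unfolding E3_def using lam_pos
      by (simp add: divide_right_mono)
    finally have "- E3 \<le> - moreau_env lam psi y" by simp
    then have "exp (- E3) / Zc \<le> dens y" unfolding dens_eq using Zc_pos by (simp add: divide_right_mono)
    then have num: "N0 \<le> dens y * q y x" unfolding N0_def
      using q2 Zc_pos Apos dens_pos[of y] by (intro mult_mono) auto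
    have den: "dens x * q x y \<le> D0" unfolding D0_def
      using dens_le[of x] q_le[of x y] dens_pos[of x] q_pos[of x y] unfolding A_def
      by (intro mult_mono) auto
    have "N0 / D0 \<le> (dens y * q y x) / (dens x * q x y)"
      by (rule frac_le) (use N0 num dq_pos[of x y] den in auto)
    then have "a0 \<le> acc x y" unfolding a0_def acc_eq by (simp add: min.coboundedI2)
    then show ?thesis using q1 d1 a0 by (intro mult_mono) auto
  qed
  show ?thesis
  proof (intro exI[of _ "\<delta>1 * a0"] exI[of _ B] conjI allI impI ballI)
    show "0 < \<delta>1 * a0" using d1 a0 by simp
    show "B \<in> sets lborel" unfolding B_def by simp
    show "0 < measure lborel B" unfolding B_def by (rule content_cball_pos) simp
    show "emeasure lborel B < \<infinity>" unfolding B_def by (rule emeasure_lborel_cball_finite)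
  qed (rule key)
qed

end

theorem theorem5:
  fixes psi :: "'a::euclidean_space \<Rightarrow> ereal"
    and lam h l :: real
  assumes proper: "proper_fun psi"
    and closed: "closed_fun psi"
    and convex: "convex_fun psi"
    and bdd_below: "\<exists>m::real. \<forall>x. ereal m \<le> psi x"
    and integrable: "(\<integral>\<^sup>+ x. ennreal (exp_neg (psi x)) \<partial>lborel) < \<infinity>"
    and lam_pos: "lam > 0"
    and h_pos: "h > 0"
    and prox_growth: "
        Limsup at_infinity (\<lambda>x. ereal (norm (prox lam psi x) / norm x)) = ereal l"
    and l_lt1: "l < 1"
    and inwards: "((\<lambda>x. \<integral> y. indicator
            (sym_diff {y. target_dens lam psi y * mala_q lam psi h y x
                          \<ge> target_dens lam psi x * mala_q lam psi h x y}
                      {y. norm y \<le> norm x}) y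
            * mala_q lam psi h x y \<partial>lborel) \<longlongrightarrow> 0) at_infinity"
    and h_le: "h \<le> 2 * lam"
  shows "geometrically_ergodic (mala_kernel_n lam psi h) (target_measure lam psi)"
proof -
  from bdd_below obtain m where m: "\<And>x. ereal m \<le> psi x" by blast
  define lg where "lg = (max l 0 + 1) / 2"
  have lg: "0 \<le> lg" "lg < 1" "l < lg" unfolding lg_def using l_lt1 by auto
  have "eventually (\<lambda>x. ereal (norm (prox lam psi x) / norm x) < ereal lg) at_infinity"
    by (rule Limsup_lessD) (use prox_growth lg in simp)
  then obtain b where b: "\<And>x. b \<le> norm x \<Longrightarrow> ereal (norm (prox lam psi x) / norm x) < ereal lg"
    unfolding eventually_at_infinity by blast
  define Rg where "Rg = max b 1"
  have Rg: "0 \<le> Rg" unfolding Rg_def by simp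
  have growth: "norm (prox lam psi x) \<le> lg * norm x" if "Rg \<le> norm x" for x
  proof -
    have "1 \<le> norm x" using that unfolding Rg_def by simp
    then have x1: "0 < norm x" by linarith
    have "norm (prox lam psi x) / norm x < lg" using b[of x] that unfolding Rg_def by simp
    then show ?thesis using x1 by (simp add: divide_less_eq less_imp_le)
  qed
  interpret M: mala3 psi lam m h Rg lg
    by unfold_locales (use proper closed convex m lam_pos h_pos h_le lg Rg growth inwards in auto)
  obtain gam Kc where gam: "0 \<le> gam" "gam < 1" and Kc: "0 < Kc"
    and drift: "\<And>x. (\<integral>y. M.q x y * M.acc x y * (1 + norm y) \<partial>lborel)
        + (1 - (\<integral>y. M.q x y * M.acc x y \<partial>lborel)) * (1 + norm x) \<le> gam * (1 + norm x) + Kc"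
    using M.drift_ex by blast
  interpret H: harris "\<lambda>x y. mala_q lam psi h x y * mala_acc lam psi h x y" "\<lambda>x. 1 + norm x"
    "target_dens lam psi" gam Kc
  proof unfold_locales
    show "\<And>x y. 0 \<le> mala_q lam psi h x y * mala_acc lam psi h x y" by (rule M.kk_nn)
    show "(\<lambda>(x, y). mala_q lam psi h x y * mala_acc lam psi h x y) \<in> borel_measurable (lborel \<Otimes>\<^sub>M lborel)"
      by (rule M.kk_meas)
    show "\<And>x. integrable lborel (\<lambda>y. mala_q lam psi h x y * mala_acc lam psi h x y)" by (rule M.kk_int)
    show "\<And>x. (\<integral>y. mala_q lam psi h x y * mala_acc lam psi h x y \<partial>lborel) \<le> 1" by (rule M.kk_le1)
    show "\<And>x. 1 \<le> 1 + norm x" by simp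
    show "(\<lambda>x::'a. 1 + norm x) \<in> borel_measurable borel" by measurable
    show "\<And>x. integrable lborel (\<lambda>y. mala_q lam psi h x y * mala_acc lam psi h x y * (1 + norm y))"
      by (rule M.kkV_int)
    show "\<And>x. (\<integral>y. mala_q lam psi h x y * mala_acc lam psi h x y * (1 + norm y) \<partial>lborel)
        + (1 - (\<integral>y. mala_q lam psi h x y * mala_acc lam psi h x y \<partial>lborel)) * (1 + norm x)
        \<le> gam * (1 + norm x) + Kc" by (rule drift)
    show "0 \<le> gam" "gam < 1" "0 < Kc" by (fact gam(1), fact gam(2), fact Kc)
    show "\<And>R. \<exists>\<delta> B. 0 < \<delta> \<and> B \<in> sets lborel \<and> 0 < measure lborel B \<and> emeasure lborel B < \<infinity>
        \<and> (\<forall>x. 1 + norm x \<le> R \<longrightarrow> (\<forall>y\<in>B. \<delta> \<le> mala_q lam psi h x y * mala_acc lam psi h x y))"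
      by (rule M.minor_ex)
    show "\<And>x. 0 \<le> target_dens lam psi x" using M.dens_pos less_imp_le by blast
    show "target_dens lam psi \<in> borel_measurable borel" by (rule M.dens_meas)
    show "integrable lborel (target_dens lam psi)" by (rule M.dens_int)
    show "(\<integral>x. target_dens lam psi x \<partial>lborel) = 1" by (rule M.dens_one)
    show "integrable lborel (\<lambda>x. target_dens lam psi x * (1 + norm x))" by (rule M.densV_int)
    show "\<And>x y. target_dens lam psi x * (mala_q lam psi h x y * mala_acc lam psi h x y)
        = target_dens lam psi y * (mala_q lam psi h y x * mala_acc lam psi h y x)" by (rule M.balance)
  qed
  have op: "mala_op lam psi h = H.P" by (intro ext) (simp add: mala_op_def H.P_def)
  have kn: "mala_kernel_n lam psi h = (\<lambda>n x A. (H.P ^^ n) (indicator A) x)"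
    by (intro ext) (simp add: mala_kernel_n_def op)
  show ?thesis unfolding kn target_measure_def by (rule H.geo_ergodic)
qed

end
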